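(* For every tree $T\subseteq\mathbb{N}^{<\mathbb{N}}$, the set $\mathcal{JT}(T)=\{J(\sigma):\sigma\in T\}$ is a tree and is computable in $T$.
   Context: A tree is a subset of $\mathbb{N}^{<\mathbb{N}}$ closed under initial segments. Finite strings of natural numbers are coded by natural numbers via a fixed computable coding in which $\sigma\subsetneq\tau$ implies code$(\sigma)<$ code$(\tau)$. For a finite string $\sigma$ and $\tau$, $\{n\}^{\tau}(n)\downarrow$ means the $n$-th Turing machine on input $n$ with oracle $\tau$ halts in fewer than $|\tau|$ steps. Set $t_{-1}=1$ and $t_n=\max\{t_{n-1}+1,\ \mu t(\{n\}^{\sigma\restriction t}(n)\downarrow)\}$ (with $t_n=t_{n-1}+1$ if no such $t$), where $\sigma\restriction t$ is the initial segment of length $\min(t,|\sigma|)$; the Jump function is $J(\sigma)=\langle\sigma\restriction t_0,\dots,\sigma\restriction t_{k-1}\rangle$, where $k$ is least with $t_k>|\sigma|$. *)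

theory Defs
  imports "HOL-Library.Nat_Bijection" "HOL-Library.Sublist"
begin

text \<open>Coding: code [] = 0 and
  code (s @ [x]) = Suc (prod_encode (x, code s)); this is a computable bijection
  with s a proper prefix of t implies code s < code t.\<close>

definition scode :: "nat list \<Rightarrow> nat" where
  "scode s = list_encode (rev s)"

definition is_tree :: "'a list set \<Rightarrow> bool" where
  "is_tree A \<longleftrightarrow> (\<forall>\<tau>\<in>A. \<forall>\<rho>. prefix \<rho> \<tau> \<longrightarrow> \<rho> \<in> A)"

datatype instr =
    Inc nat nat
  | Dec nat nat nat
  | Orc nat nat

type_synonym prog = "instr list"
type_synonym orcl = "nat \<Rightarrow> nat option"
type_synonym config = "nat \<times> (nat \<Rightarrow> nat)"

definition step :: "prog \<Rightarrow> orcl \<Rightarrow> config \<Rightarrow> config option" where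
  "step p Q c = (case c of (pc, R) \<Rightarrow>
     if length p \<le> pc then Some (pc, R) else
     (case p ! pc of
        Inc r j \<Rightarrow> Some (j, R(r := Suc (R r)))
      | Dec r j k \<Rightarrow> (if R r = 0 then Some (k, R) else Some (j, R(r := R r - 1)))
      | Orc r j \<Rightarrow> (case Q (R r) of None \<Rightarrow> None | Some v \<Rightarrow> Some (j, R(r := v)))))"

fun run :: "prog \<Rightarrow> orcl \<Rightarrow> nat \<Rightarrow> config \<Rightarrow> config option" where
  "run p Q 0 c = Some c"
| "run p Q (Suc s) c = (case run p Q s c of None \<Rightarrow> None | Some c' \<Rightarrow> step p Q c')"

definition init :: "nat \<Rightarrow> nat \<Rightarrow> nat" where
  "init x = (\<lambda>r. if r = 0 then x else 0)"

definition halted_at :: "prog \<Rightarrow> orcl \<Rightarrow> nat \<Rightarrow> nat \<Rightarrow> bool" where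
  "halted_at p Q x s = (case run p Q s (0, init x) of None \<Rightarrow> False
                          | Some (pc, R) \<Rightarrow> length p \<le> pc)"

definition decode_instr :: "nat \<Rightarrow> instr" where
  "decode_instr c = (let b = c div 3 in
     if c mod 3 = 0 then Inc (fst (prod_decode b)) (snd (prod_decode b))
     else if c mod 3 = 1 then
       Dec (fst (prod_decode b)) (fst (prod_decode (snd (prod_decode b))))
           (snd (prod_decode (snd (prod_decode b))))
     else Orc (fst (prod_decode b)) (snd (prod_decode b)))"

definition machine :: "nat \<Rightarrow> prog" where
  "machine e = map decode_instr (list_decode e)"

definition str_orc :: "nat list \<Rightarrow> orcl" where
  "str_orc \<tau> = (\<lambda>i. if i < length \<tau> then Some (\<tau> ! i) else None)"

definition conv :: "nat \<Rightarrow> nat list \<Rightarrow> bool" where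
  "conv n \<tau> \<longleftrightarrow> (\<exists>s < length \<tau>. halted_at (machine n) (str_orc \<tau>) n s)"

definition tnext :: "nat list \<Rightarrow> nat \<Rightarrow> nat \<Rightarrow> nat" where
  "tnext \<sigma> n prev = (if \<exists>t. conv n (take t \<sigma>)
                       then max (prev + 1) (LEAST t. conv n (take t \<sigma>))
                       else prev + 1)"

text \<open>jt \<sigma> n = t_n, with t_{-1} = 1.\<close>
fun jt :: "nat list \<Rightarrow> nat \<Rightarrow> nat" where
  "jt \<sigma> 0 = tnext \<sigma> 0 1"
| "jt \<sigma> (Suc n) = tnext \<sigma> (Suc n) (jt \<sigma> n)"

definition Jk :: "nat list \<Rightarrow> nat" where
  "Jk \<sigma> = (LEAST k. length \<sigma> < jt \<sigma> k)"

definition Jump :: "nat list \<Rightarrow> nat list" where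
  "Jump \<sigma> = map (\<lambda>i. scode (take (jt \<sigma> i) \<sigma>)) [0..<Jk \<sigma>]"

definition JT :: "nat list set \<Rightarrow> nat list set" where
  "JT T = Jump ` T"

definition char_orc :: "nat set \<Rightarrow> orcl" where
  "char_orc X = (\<lambda>i. Some (if i \<in> X then 1 else 0))"

definition computable_in :: "nat set \<Rightarrow> nat set \<Rightarrow> bool" where
  "computable_in A X \<longleftrightarrow> (\<exists>p. \<forall>x. \<exists>s pc R.
      run p (char_orc X) s (0, init x) = Some (pc, R) \<and> length p \<le> pc \<and>
      R 0 = (if x \<in> A then 1 else 0))"

end

theory Submission
  imports Defs
begin


datatype cmd = Skip | CInc nat | COrc nat | Seq cmd cmd | IfDec nat cmd cmd | While nat cmd

inductive big :: "orcl \<Rightarrow> cmd \<Rightarrow> (nat \<Rightarrow> nat) \<Rightarrow> (nat \<Rightarrow> nat) \<Rightarrow> bool" for Q where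
  bSkip: "big Q Skip R R"
| bInc: "big Q (CInc r) R (R(r := Suc (R r)))"
| bOrc: "Q (R r) = Some v \<Longrightarrow> big Q (COrc r) R (R(r := v))"
| bSeq: "big Q c1 R R1 \<Longrightarrow> big Q c2 R1 R2 \<Longrightarrow> big Q (Seq c1 c2) R R2"
| bIf0: "R r = 0 \<Longrightarrow> big Q c1 R R' \<Longrightarrow> big Q (IfDec r c1 c2) R R'"
| bIf1: "R r \<noteq> 0 \<Longrightarrow> big Q c2 (R(r := R r - 1)) R' \<Longrightarrow> big Q (IfDec r c1 c2) R R'"
| bW0: "R r = 0 \<Longrightarrow> big Q (While r c) R R"
| bW1: "R r \<noteq> 0 \<Longrightarrow> big Q c (R(r := R r - 1)) R1 \<Longrightarrow> big Q (While r c) R1 R2 \<Longrightarrow> big Q (While r c) R R2"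

fun clen :: "cmd \<Rightarrow> nat" where
  "clen Skip = 0"
| "clen (CInc r) = 1"
| "clen (COrc r) = 1"
| "clen (Seq c1 c2) = clen c1 + clen c2"
| "clen (IfDec r c1 c2) = clen c1 + clen c2 + 3"
| "clen (While r c) = clen c + 3"

definition jmp :: "nat \<Rightarrow> nat \<Rightarrow> instr list" where
  "jmp q t = [Inc 0 (Suc q), Dec 0 t t]"

fun comp :: "cmd \<Rightarrow> nat \<Rightarrow> instr list" where
  "comp Skip a = []"
| "comp (CInc r) a = [Inc r (Suc a)]"
| "comp (COrc r) a = [Orc r (Suc a)]"
| "comp (Seq c1 c2) a = comp c1 a @ comp c2 (a + clen c1)"
| "comp (IfDec r c1 c2) a = [Dec r (Suc a) (a + 3 + clen c2)] @ comp c2 (Suc a)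
     @ jmp (Suc a + clen c2) (a + 3 + clen c2 + clen c1) @ comp c1 (a + 3 + clen c2)"
| "comp (While r c) a = [Dec r (Suc a) (a + 3 + clen c)] @ comp c (Suc a) @ jmp (Suc a + clen c) a"

lemma len_comp[simp]: "length (comp c a) = clen c"
  by (induction c arbitrary: a) (auto simp: jmp_def)

definition emb :: "prog \<Rightarrow> nat \<Rightarrow> instr list \<Rightarrow> bool" where
  "emb p a q \<longleftrightarrow> a + length q \<le> length p \<and> (\<forall>i<length q. p ! (a + i) = q ! i)"

lemma emb_app1: "emb p a (q1 @ q2) \<Longrightarrow> emb p a q1"
  by (auto simp: emb_def nth_append)
lemma emb_app2: "emb p a (q1 @ q2) \<Longrightarrow> emb p (a + length q1) q2"
  unfolding emb_def
proof (intro conjI allI impI)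
  assume h: "a + length (q1 @ q2) \<le> length p \<and> (\<forall>i<length (q1 @ q2). p ! (a + i) = (q1 @ q2) ! i)"
  then show "a + length q1 + length q2 \<le> length p" by simp
  fix i assume "i < length q2"
  then have "p ! (a + (length q1 + i)) = (q1 @ q2) ! (length q1 + i)" using h by simp
  then show "p ! (a + length q1 + i) = q2 ! i" by (simp add: nth_append add.assoc)
qed

lemma emb_Cons: "emb p a (x # q) \<Longrightarrow> p ! a = x \<and> a < length p \<and> emb p (Suc a) q"
  unfolding emb_def
proof (intro conjI allI impI)
  assume h: "a + length (x # q) \<le> length p \<and> (\<forall>i<length (x # q). p ! (a + i) = (x # q) ! i)"
  then show "p ! a = x" by (metis add.right_neutral length_Cons nth_Cons_0 zero_less_Suc)
  show "a < length p" "Suc a + length q \<le> length p" using h by auto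
  fix i assume "i < length q"
  then have "Suc i < length (x # q)" by simp
  then have "p ! (a + Suc i) = (x # q) ! Suc i" using h by blast
  then show "p ! (Suc a + i) = q ! i" by simp
qed

lemma run_add: "run p Q (s1 + s2) c = Option.bind (run p Q s1 c) (run p Q s2)"
proof (induction s2)
  case 0 then show ?case by (cases "run p Q s1 c") auto
next
  case (Suc s2) then show ?case by (cases "run p Q s1 c") (auto split: option.splits)
qed

lemma run_seq: "run p Q s1 c = Some c1 \<Longrightarrow> run p Q s2 c1 = Some c2 \<Longrightarrow> run p Q (s1 + s2) c = Some c2"
  by (simp add: run_add)

lemma run1: "run p Q 1 c = step p Q c"
  by (simp split: option.splits)

lemma emb_step: "emb p a q \<Longrightarrow> i < length q \<Longrightarrow> p ! (a+i) = q ! i \<and> a + i < length p"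
  by (auto simp: emb_def)

lemma step_Inc: "pc < length p \<Longrightarrow> p ! pc = Inc r j \<Longrightarrow> step p Q (pc, R) = Some (j, R(r := Suc (R r)))"
  by (simp add: step_def)
lemma step_Orc: "pc < length p \<Longrightarrow> p ! pc = Orc r j \<Longrightarrow> Q (R r) = Some v \<Longrightarrow> step p Q (pc, R) = Some (j, R(r := v))"
  by (simp add: step_def)
lemma step_Dec0: "pc < length p \<Longrightarrow> p ! pc = Dec r j k \<Longrightarrow> R r = 0 \<Longrightarrow> step p Q (pc, R) = Some (k, R)"
  by (simp add: step_def)
lemma step_Dec1: "pc < length p \<Longrightarrow> p ! pc = Dec r j k \<Longrightarrow> R r \<noteq> 0 \<Longrightarrow> step p Q (pc, R) = Some (j, R(r := R r - 1))"
  by (simp add: step_def)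

lemma jmp_run: "emb p q (jmp q t) \<Longrightarrow> run p Q 2 (q, R) = Some (t, R)"
proof -
  assume e: "emb p q (jmp q t)"
  have a: "step p Q (q, R) = Some (Suc q, R(0 := Suc (R 0)))"
    using emb_step[OF e, of 0] by (intro step_Inc) (auto simp: jmp_def)
  have b: "step p Q (Suc q, R(0 := Suc (R 0))) = Some (t, R)"
    using emb_step[OF e, of 1] by (subst step_Dec1) (auto simp: jmp_def)
  show ?thesis using a b by (simp add: numeral_2_eq_2)
qed

lemma comp_correct:
  assumes "big Q c R R'"
  shows "emb p a (comp c a) \<Longrightarrow> \<exists>s. run p Q s (a, R) = Some (a + clen c, R')"
  using assms
proof (induction arbitrary: a rule: big.induct)
  case (bSkip R)
  have "run p Q 0 (a, R) = Some (a + clen Skip, R)" by simp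
  then show ?case by blast
next
  case (bInc R r)
  then show ?case using emb_step[OF bInc, of 0]
    by (intro exI[of _ "1::nat"]) (simp add: run1 step_Inc fun_upd_def)
next
  case (bOrc R r v)
  then show ?case using emb_step[OF bOrc(2), of 0]
    by (intro exI[of _ "1::nat"]) (simp add: run1 step_Orc fun_upd_def)
next
  case (bSeq c1 R R1 c2 R2)
  from bSeq.prems have e1: "emb p a (comp c1 a)" and e2: "emb p (a + clen c1) (comp c2 (a + clen c1))"
    using emb_app1 emb_app2 by fastforce+
  from bSeq.IH(1)[OF e1] obtain s1 where s1: "run p Q s1 (a, R) = Some (a + clen c1, R1)" by blast
  from bSeq.IH(2)[OF e2] obtain s2 where s2: "run p Q s2 (a + clen c1, R1) = Some (a + clen c1 + clen c2, R2)" by blast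
  have "a + clen c1 + clen c2 = a + clen (Seq c1 c2)" by simp
  then show ?case using run_seq[OF s1 s2] by metis
next
  case (bIf0 R r c1 R' c2)
  let ?b = "a + 3 + clen c2"
  have E: "emb p a (Dec r (Suc a) ?b # (comp c2 (Suc a) @ (jmp (Suc a + clen c2) (?b + clen c1) @ comp c1 ?b)))"
    using bIf0.prems by simp
  note E0 = emb_Cons[OF E]
  have E2: "emb p (Suc a + clen c2) (jmp (Suc a + clen c2) (?b + clen c1) @ comp c1 ?b)"
    using emb_app2[OF conjunct2[OF conjunct2[OF E0]]] by simp
  have e1: "emb p ?b (comp c1 ?b)" using emb_app2[OF E2] by (simp add: jmp_def eval_nat_numeral)
  have st: "run p Q 1 (a, R) = Some (?b, R)" using E0 bIf0.hyps
    by (simp add: run1 step_Dec0)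
  from bIf0.IH[OF e1] obtain s where s: "run p Q s (?b, R) = Some (?b + clen c1, R')" by blast
  have "?b + clen c1 = a + clen (IfDec r c1 c2)" by simp
  then show ?case using run_seq[OF st s] by metis
next
  case (bIf1 R r c2 R' c1)
  let ?b = "a + 3 + clen c2"
  have E: "emb p a (Dec r (Suc a) ?b # (comp c2 (Suc a) @ (jmp (Suc a + clen c2) (?b + clen c1) @ comp c1 ?b)))"
    using bIf1.prems by simp
  note E0 = emb_Cons[OF E]
  have E2: "emb p (Suc a + clen c2) (jmp (Suc a + clen c2) (?b + clen c1) @ comp c1 ?b)"
    using emb_app2[OF conjunct2[OF conjunct2[OF E0]]] by simp
  have e2: "emb p (Suc a) (comp c2 (Suc a))" using emb_app1[OF conjunct2[OF conjunct2[OF E0]]] .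
  have ej: "emb p (Suc a + clen c2) (jmp (Suc a + clen c2) (?b + clen c1))" using emb_app1[OF E2] .
  have st: "run p Q 1 (a, R) = Some (Suc a, R(r := R r - 1))" using E0 bIf1.hyps
    by (simp add: run1 step_Dec1)
  from bIf1.IH[OF e2] obtain s where s: "run p Q s (Suc a, R(r := R r - 1)) = Some (Suc a + clen c2, R')" by blast
  have j: "run p Q 2 (Suc a + clen c2, R') = Some (?b + clen c1, R')" using jmp_run[OF ej] .
  have "?b + clen c1 = a + clen (IfDec r c1 c2)" by simp
  then show ?case using run_seq[OF run_seq[OF st s] j] by metis
next
  case (bW0 R r c)
  have E: "emb p a (Dec r (Suc a) (a + 3 + clen c) # (comp c (Suc a) @ jmp (Suc a + clen c) a))"
    using bW0.prems by simp
  note E0 = emb_Cons[OF E]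
  show ?case using E0 bW0.hyps
    by (intro exI[of _ "1::nat"]) (simp add: run1 step_Dec0)
next
  case (bW1 R r c R1 R2)
  have E: "emb p a (Dec r (Suc a) (a + 3 + clen c) # (comp c (Suc a) @ jmp (Suc a + clen c) a))"
    using bW1.prems by simp
  note E0 = emb_Cons[OF E]
  have e2: "emb p (Suc a) (comp c (Suc a))" using emb_app1[OF conjunct2[OF conjunct2[OF E0]]] .
  have ej: "emb p (Suc a + clen c) (jmp (Suc a + clen c) a)"
    using emb_app2[OF conjunct2[OF conjunct2[OF E0]]] by simp
  have st: "run p Q 1 (a, R) = Some (Suc a, R(r := R r - 1))" using E0 bW1.hyps
    by (simp add: run1 step_Dec1)
  from bW1.IH(1)[OF e2] obtain s where s: "run p Q s (Suc a, R(r := R r - 1)) = Some (Suc a + clen c, R1)" by blast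
  have j: "run p Q 2 (Suc a + clen c, R1) = Some (a, R1)" using jmp_run[OF ej] .
  from bW1.IH(2)[OF bW1.prems] obtain s' where s': "run p Q s' (a, R1) = Some (a + clen (While r c), R2)" by blast
  show ?case using run_seq[OF run_seq[OF run_seq[OF st s] j] s'] by metis
qed

lemma comp_top: "big Q c R R' \<Longrightarrow> \<exists>s. run (comp c 0) Q s (0, R) = Some (length (comp c 0), R')"
  using comp_correct[of Q c R R' "comp c 0" 0] by (simp add: emb_def)



fun rb :: "cmd \<Rightarrow> nat" where
  "rb Skip = 0"
| "rb (CInc r) = Suc r"
| "rb (COrc r) = Suc r"
| "rb (Seq c1 c2) = max (rb c1) (rb c2)"
| "rb (IfDec r c1 c2) = max (Suc r) (max (rb c1) (rb c2))"
| "rb (While r c) = max (Suc r) (rb c)"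

lemma frame: "big Q c R R' \<Longrightarrow> rb c \<le> x \<Longrightarrow> R' x = R x"
  by (induction rule: big.induct) auto

lemma while_rule:
  assumes stp: "\<And>R. I R \<Longrightarrow> R r \<noteq> 0 \<Longrightarrow> \<exists>R1. big Q c (R(r := R r - 1)) R1 \<and> I R1 \<and> R1 r < R r"
    and fin: "\<And>R. I R \<Longrightarrow> R r = 0 \<Longrightarrow> P R"
  shows "I R \<Longrightarrow> \<exists>R'. big Q (While r c) R R' \<and> P R'"
proof (induction "R r" arbitrary: R rule: less_induct)
  case less
  show ?case
  proof (cases "R r = 0")
    case True then show ?thesis using fin[OF less.prems] bW0 by blast
  next
    case False
    then obtain R1 where R1: "big Q c (R(r := R r - 1)) R1" "I R1" "R1 r < R r" using stp[OF less.prems] by blast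
    from less.hyps[OF R1(3) R1(2)] obtain R' where "big Q (While r c) R1 R'" "P R'" by blast
    then show ?thesis using bW1[OF False R1(1)] by blast
  qed
qed

definition clear :: "nat \<Rightarrow> cmd" where "clear r = While r Skip"

lemma big_clear: "big Q (clear r) R (R(r := 0))"
proof -
  have "\<exists>R'. big Q (While r Skip) R R' \<and> R' = R(r := 0)"
    by (rule while_rule[where I="\<lambda>R'. \<forall>x. x \<noteq> r \<longrightarrow> R' x = R x"])
       (auto intro!: bSkip)
  then show ?thesis by (auto simp: clear_def)
qed

lemma rb_clear[simp]: "rb (clear r) = Suc r" by (simp add: clear_def)

definition mv :: "nat \<Rightarrow> nat \<Rightarrow> cmd" where "mv a b = While a (CInc b)"

lemma big_mv: "a \<noteq> b \<Longrightarrow> big Q (mv a b) R (R(a := 0, b := R b + R a))"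
proof -
  assume ab: "a \<noteq> b"
  have "\<exists>R'. big Q (While a (CInc b)) R R' \<and> R' = R(a := 0, b := R b + R a)"
    apply (rule while_rule[where I="\<lambda>R'. R' b + R' a = R b + R a \<and> (\<forall>x. x \<noteq> a \<longrightarrow> x \<noteq> b \<longrightarrow> R' x = R x)"])
    using ab by (auto intro!: bInc exI)
  then show ?thesis by (auto simp: mv_def)
qed

lemma rb_mv[simp]: "rb (mv a b) = max (Suc a) (Suc b)" by (simp add: mv_def)

definition mv2 :: "nat \<Rightarrow> nat \<Rightarrow> nat \<Rightarrow> cmd" where "mv2 a b d = While a (Seq (CInc b) (CInc d))"

lemma big_mv2: "a \<noteq> b \<Longrightarrow> a \<noteq> d \<Longrightarrow> b \<noteq> d \<Longrightarrow>
   big Q (mv2 a b d) R (R(a := 0, b := R b + R a, d := R d + R a))"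
proof -
  assume ab: "a \<noteq> b" "a \<noteq> d" "b \<noteq> d"
  have "\<exists>R'. big Q (While a (Seq (CInc b) (CInc d))) R R' \<and> R' = R(a := 0, b := R b + R a, d := R d + R a)"
    apply (rule while_rule[where I="\<lambda>R'. R' b + R' a = R b + R a \<and> R' d + R' a = R d + R a \<and> (\<forall>x. x \<noteq> a \<longrightarrow> x \<noteq> b \<longrightarrow> x \<noteq> d \<longrightarrow> R' x = R x)"])
    using ab by (auto intro!: bInc bSeq exI)
  then show ?thesis by (auto simp: mv2_def)
qed

lemma rb_mv2[simp]: "rb (mv2 a b d) = max (Suc a) (max (Suc b) (Suc d))" by (simp add: mv2_def)



lemma prod_decode_0[simp]: "prod_decode 0 = (0, 0)"
proof -
  have "prod_encode (0, 0) = 0" by (simp add: prod_encode_def)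
  then show ?thesis by (metis prod_encode_inverse)
qed

lemma prod_decode_Suc: "prod_decode (Suc j) =
   (case prod_decode j of (m, n) \<Rightarrow> if n = 0 then (0, Suc m) else (Suc m, n - 1))"
proof -
  obtain m n where mn: "prod_decode j = (m, n)" by fastforce
  then have j: "j = prod_encode (m, n)" by (metis prod_decode_inverse)
  show ?thesis
  proof (cases "n = 0")
    case True
    then have "Suc j = prod_encode (0, Suc m)" using j by (simp add: prod_encode_def)
    then show ?thesis using mn True by simp
  next
    case False
    then obtain k where k: "n = Suc k" by (cases n) auto
    then have "Suc j = prod_encode (Suc m, n - 1)" using j by (simp add: prod_encode_def)
    then show ?thesis using mn False by simp
  qed
qed

definition U :: cmd where
  "U = Seq (clear 1) (Seq (clear 2) (Seq (While 0 (IfDec 2 (Seq (mv 1 2) (CInc 2)) (CInc 1))) (mv 2 0)))"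

lemma rb_U: "rb U = 3" by (simp add: U_def)

lemma big_U: "\<exists>R'. big Q U R R' \<and> R' 0 = snd (prod_decode (R 0)) \<and> R' 1 = fst (prod_decode (R 0))"
proof -
  let ?x = "R 0"
  define R0 where "R0 = R(1 := 0, 2 := 0)"
  have c1: "big Q (clear 1) R (R(1:=0))" by (rule big_clear)
  have c2: "big Q (clear 2) (R(1:=0)) R0" unfolding R0_def by (rule big_clear)
  have "\<exists>R'. big Q (While 0 (IfDec 2 (Seq (mv 1 2) (CInc 2)) (CInc 1))) R0 R' \<and> (R' 1, R' 2) = prod_decode ?x \<and> R' 0 = 0"
  proof (rule while_rule[where I="\<lambda>R'. R' 0 \<le> ?x \<and> (R' 1, R' 2) = prod_decode (?x - R' 0)"])
    fix S :: "nat \<Rightarrow> nat" assume I: "S 0 \<le> ?x \<and> (S 1, S 2) = prod_decode (?x - S 0)" and nz: "S 0 \<noteq> 0"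
    let ?S = "S(0 := S 0 - 1)"
    have e: "?x - ?S 0 = Suc (?x - S 0)" using I nz by simp arith
    have pd: "prod_decode (?x - ?S 0) = (if S 2 = 0 then (0, Suc (S 1)) else (Suc (S 1), S 2 - 1))"
      unfolding e prod_decode_Suc using I[THEN conjunct2, symmetric] by simp
    show "\<exists>R1. big Q (IfDec 2 (Seq (mv 1 2) (CInc 2)) (CInc 1)) ?S R1 \<and>
              (R1 0 \<le> ?x \<and> (R1 1, R1 2) = prod_decode (?x - R1 0)) \<and> R1 0 < S 0"
    proof (cases "S 2 = 0")
      case True
      let ?T = "?S(1 := 0, 2 := ?S 2 + ?S 1)"
      have "big Q (IfDec 2 (Seq (mv 1 2) (CInc 2)) (CInc 1)) ?S (?T(2 := Suc (?T 2)))"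
        using True by (intro bIf0 bSeq[OF big_mv bInc]) auto
      then show ?thesis using pd True I nz by (intro exI) auto
    next
      case False
      let ?T = "?S(2 := ?S 2 - 1)"
      have "big Q (IfDec 2 (Seq (mv 1 2) (CInc 2)) (CInc 1)) ?S (?T(1 := Suc (?T 1)))"
        using False by (intro bIf1 bInc) auto
      then show ?thesis using pd False I nz by (intro exI) auto
    qed
  next
    fix S :: "nat \<Rightarrow> nat" assume "S 0 \<le> ?x \<and> (S 1, S 2) = prod_decode (?x - S 0)" "S 0 = 0"
    then show "(S 1, S 2) = prod_decode ?x \<and> S 0 = 0" by simp
  next
    show "R0 0 \<le> ?x \<and> (R0 1, R0 2) = prod_decode (?x - R0 0)" by (simp add: R0_def)
  qed
  then obtain R1 where R1: "big Q (While 0 (IfDec 2 (Seq (mv 1 2) (CInc 2)) (CInc 1))) R0 R1"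
    "(R1 1, R1 2) = prod_decode ?x" "R1 0 = 0" by blast
  have "big Q U R (R1(2 := 0, 0 := R1 0 + R1 2))"
    unfolding U_def by (intro bSeq[OF c1] bSeq[OF c2] bSeq[OF R1(1)] big_mv) simp
  then show ?thesis using R1(2,3) by (intro exI) (auto simp: prod_eq_iff) 
qed



fun seqs :: "cmd list \<Rightarrow> cmd" where
  "seqs [] = Skip"
| "seqs (c # cs) = Seq c (seqs cs)"

lemma big_seqs_Cons: "big Q c R R1 \<Longrightarrow> big Q (seqs cs) R1 R2 \<Longrightarrow> big Q (seqs (c # cs)) R R2"
  by (auto intro: bSeq)
lemma big_seqs_Nil: "big Q (seqs []) R R" by (auto intro: bSkip)

definition Pbody :: cmd where "Pbody = seqs [clear 4, mv2 3 0 4, mv 4 3, CInc 0]"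

lemma big_Pbody: "big Q Pbody S (S(4 := 0, 3 := S 3, 0 := S 0 + S 3 + 1))"
proof -
  let ?S1 = "S(4 := 0)"
  let ?S2 = "?S1(3 := 0, 0 := ?S1 0 + ?S1 3, 4 := ?S1 4 + ?S1 3)"
  let ?S3 = "?S2(4 := 0, 3 := ?S2 3 + ?S2 4)"
  let ?S4 = "?S3(0 := Suc (?S3 0))"
  have "big Q Pbody S ?S4" unfolding Pbody_def
    by (intro big_seqs_Cons[OF big_clear] big_seqs_Cons[OF big_mv2] big_seqs_Cons[OF big_mv]
          big_seqs_Cons[OF bInc] big_seqs_Nil) auto
  moreover have "?S4 = S(4 := 0, 3 := S 3, 0 := S 0 + S 3 + 1)" by (auto simp: fun_eq_iff)
  ultimately show ?thesis by simp
qed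

definition PP :: cmd where "PP = seqs [clear 2, clear 3, mv2 1 2 3, mv 0 3, While 3 Pbody, mv 2 0]"

lemma rb_PP: "rb PP = 5" by (simp add: PP_def Pbody_def)

lemma big_PP: "\<exists>R'. big Q PP R R' \<and> R' 0 = prod_encode (R 1, R 0)"
proof -
  let ?m = "R 1" and ?n = "R 0"
  let ?S1 = "R(2 := 0, 3 := 0)"
  let ?S2 = "?S1(1 := 0, 2 := ?S1 2 + ?S1 1, 3 := ?S1 3 + ?S1 1)"
  let ?S3 = "?S2(0 := 0, 3 := ?S2 3 + ?S2 0)"
  have a: "big Q (clear 2) R (R(2:=0))" by (rule big_clear)
  have b: "big Q (clear 3) (R(2:=0)) ?S1" by (rule big_clear)
  have c: "big Q (mv2 1 2 3) ?S1 ?S2" by (rule big_mv2) auto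
  have d: "big Q (mv 0 3) ?S2 ?S3" by (rule big_mv) auto
  have "\<exists>R'. big Q (While 3 Pbody) ?S3 R' \<and> R' 0 = triangle (?m + ?n) \<and> R' 2 = ?m"
  proof (rule while_rule[where I="\<lambda>S. S 0 + triangle (S 3) = triangle (?m + ?n) \<and> S 2 = ?m"])
    fix S :: "nat \<Rightarrow> nat" assume I: "S 0 + triangle (S 3) = triangle (?m + ?n) \<and> S 2 = ?m" and nz: "S 3 \<noteq> 0"
    let ?S = "S(3 := S 3 - 1)"
    obtain k where k: "S 3 = Suc k" using nz by (cases "S 3") auto
    show "\<exists>R1. big Q Pbody ?S R1 \<and> (R1 0 + triangle (R1 3) = triangle (?m + ?n) \<and> R1 2 = ?m) \<and> R1 3 < S 3"
      using big_Pbody[of Q ?S] I k by (intro exI) auto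
  next
    fix S :: "nat \<Rightarrow> nat" assume "S 0 + triangle (S 3) = triangle (?m + ?n) \<and> S 2 = ?m" "S 3 = 0"
    then show "S 0 = triangle (?m + ?n) \<and> S 2 = ?m" by simp
  next
    show "?S3 0 + triangle (?S3 3) = triangle (?m + ?n) \<and> ?S3 2 = ?m" by simp
  qed
  then obtain S4 where S4: "big Q (While 3 Pbody) ?S3 S4" "S4 0 = triangle (?m + ?n)" "S4 2 = ?m" by blast
  have e: "big Q (mv 2 0) S4 (S4(2 := 0, 0 := S4 0 + S4 2))" by (rule big_mv) simp
  have "big Q PP R (S4(2 := 0, 0 := S4 0 + S4 2))" unfolding PP_def
    by (intro big_seqs_Cons[OF a] big_seqs_Cons[OF b] big_seqs_Cons[OF c] big_seqs_Cons[OF d]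
          big_seqs_Cons[OF S4(1)] big_seqs_Cons[OF e] big_seqs_Nil)
  moreover have "(S4(2 := 0, 0 := S4 0 + S4 2)) 0 = prod_encode (R 1, R 0)" using S4 by (simp add: prod_encode_def)
  ultimately show ?thesis by blast
qed



definition cf :: "orcl \<Rightarrow> (nat \<Rightarrow> nat) \<Rightarrow> bool" where
  "cf Q f \<longleftrightarrow> (\<exists>c. \<forall>R. \<exists>R'. big Q c R R' \<and> R' 0 = f (R 0))"

lemma cf_id: "cf Q (\<lambda>x. x)"
  unfolding cf_def by (auto intro!: exI[of _ Skip] bSkip)

lemma cf_Suc: "cf Q Suc"
  unfolding cf_def by (rule exI[of _ "CInc 0"]) (auto intro!: exI bInc)

lemma cf_zero: "cf Q (\<lambda>x. 0)"
  unfolding cf_def by (rule exI[of _ "clear 0"]) (auto intro!: exI big_clear)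

lemma cf_comp: "cf Q f \<Longrightarrow> cf Q g \<Longrightarrow> cf Q (\<lambda>x. f (g x))"
  unfolding cf_def
proof -
  assume "\<exists>c. \<forall>R. \<exists>R'. big Q c R R' \<and> R' 0 = f (R 0)" "\<exists>c. \<forall>R. \<exists>R'. big Q c R R' \<and> R' 0 = g (R 0)"
  then obtain cf cg where cf: "\<And>R. \<exists>R'. big Q cf R R' \<and> R' 0 = f (R 0)"
     and cg: "\<And>R. \<exists>R'. big Q cg R R' \<and> R' 0 = g (R 0)" by blast
  show "\<exists>c. \<forall>R. \<exists>R'. big Q c R R' \<and> R' 0 = f (g (R 0))"
  proof (rule exI, intro allI)
    fix R :: "nat \<Rightarrow> nat"
    obtain R1 where 1: "big Q cg R R1" "R1 0 = g (R 0)" using cg by blast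
    obtain R2 where 2: "big Q cf R1 R2" "R2 0 = f (R1 0)" using cf by blast
    show "\<exists>R'. big Q (Seq cg cf) R R' \<and> R' 0 = f (g (R 0))" using 1 2 bSeq by metis
  qed
qed

lemma cf_snd0: "cf Q (\<lambda>x. snd (prod_decode x))"
  unfolding cf_def using big_U by blast

lemma cf_fst0: "cf Q (\<lambda>x. fst (prod_decode x))"
  unfolding cf_def
proof (rule exI, intro allI)
  fix R :: "nat \<Rightarrow> nat"
  obtain R1 where 1: "big Q U R R1" "R1 1 = fst (prod_decode (R 0))" using big_U by blast
  have m: "big Q (mv 1 0) (R1(0 := 0)) (R1(0 := 0, 1 := 0, 0 := 0 + R1 1))"
    using big_mv[of 1 0 Q "R1(0:=0)"] by simp
  have "big Q (seqs [U, clear 0, mv 1 0]) R (R1(0 := 0, 1 := 0, 0 := 0 + R1 1))"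
    by (intro big_seqs_Cons[OF 1(1)] big_seqs_Cons[OF big_clear] big_seqs_Cons[OF m] big_seqs_Nil)
  then show "\<exists>R'. big Q (seqs [U, clear 0, mv 1 0]) R R' \<and> R' 0 = fst (prod_decode (R 0))"
    using 1 by fastforce
qed

lemma cf_orc: "(\<And>x. Q x \<noteq> None) \<Longrightarrow> cf Q (\<lambda>x. the (Q x))"
  unfolding cf_def
proof (rule exI, intro allI)
  fix R :: "nat \<Rightarrow> nat" assume "\<And>x. Q x \<noteq> None"
  then obtain v where v: "Q (R 0) = Some v" by blast
  show "\<exists>R'. big Q (COrc 0) R R' \<and> R' 0 = the (Q (R 0))"
    using bOrc[of Q R 0 v] v by fastforce
qed

lemma cf_pair: "cf Q f \<Longrightarrow> cf Q g \<Longrightarrow> cf Q (\<lambda>x. prod_encode (f x, g x))"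
  unfolding cf_def
proof -
  assume "\<exists>c. \<forall>R. \<exists>R'. big Q c R R' \<and> R' 0 = f (R 0)" "\<exists>c. \<forall>R. \<exists>R'. big Q c R R' \<and> R' 0 = g (R 0)"
  then obtain cf cg where cf: "\<And>R. \<exists>R'. big Q cf R R' \<and> R' 0 = f (R 0)"
     and cg: "\<And>R. \<exists>R'. big Q cg R R' \<and> R' 0 = g (R 0)" by blast
  define B where "B = max (max (rb cf) (rb cg)) 5"
  define C where "C = Suc B"
  define D where "D = Suc (Suc B)"
  have B: "B \<ge> 5" "rb cf \<le> B" "rb cg \<le> B" unfolding B_def by auto
  have dist: "B \<noteq> 0" "B \<noteq> 1" "C \<noteq> 0" "C \<noteq> 1" "D \<noteq> 0" "D \<noteq> 1" "B \<noteq> C" "B \<noteq> D" "C \<noteq> D"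
    "rb cf \<le> C" "rb cg \<le> C" "rb cf \<le> D"
    using B unfolding C_def D_def by auto
  show "\<exists>c. \<forall>R. \<exists>R'. big Q c R R' \<and> R' 0 = prod_encode (f (R 0), g (R 0))"
  proof (rule exI, intro allI)
    fix R :: "nat \<Rightarrow> nat"
    let ?x = "R 0"
    let ?S1 = "R(B := 0)"
    let ?S2 = "?S1(D := 0)"
    let ?S3 = "?S2(0 := 0, B := ?S2 B + ?S2 0, D := ?S2 D + ?S2 0)"
    let ?S4 = "?S3(D := 0, 0 := ?S3 0 + ?S3 D)"
    have s1: "big Q (clear B) R ?S1" by (rule big_clear)
    have s2: "big Q (clear D) ?S1 ?S2" by (rule big_clear)
    have s3: "big Q (mv2 0 B D) ?S2 ?S3" by (rule big_mv2) (use dist in auto)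
    have s4: "big Q (mv D 0) ?S3 ?S4" by (rule big_mv) (use dist in auto)
    have v4: "?S4 0 = ?x" "?S4 B = ?x" using dist by auto
    obtain S5 where s5: "big Q cf ?S4 S5" "S5 0 = f (?S4 0)" using cf by blast
    have v5: "S5 0 = f ?x" "S5 B = ?x" using s5 v4 frame[OF s5(1) B(2)] by auto
    let ?S6 = "S5(C := 0)"
    let ?S7 = "?S6(0 := 0, C := ?S6 C + ?S6 0)"
    let ?S8 = "?S7(B := 0, 0 := ?S7 0 + ?S7 B)"
    have s6: "big Q (clear C) S5 ?S6" by (rule big_clear)
    have s7: "big Q (mv 0 C) ?S6 ?S7" by (rule big_mv) (use dist in auto)
    have s8: "big Q (mv B 0) ?S7 ?S8" by (rule big_mv) (use dist in auto)
    have v8: "?S8 0 = ?x" "?S8 C = f ?x" using v5 dist by auto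
    obtain S9 where s9: "big Q cg ?S8 S9" "S9 0 = g (?S8 0)" using cg by blast
    have v9: "S9 0 = g ?x" "S9 C = f ?x" using s9 v8 frame[OF s9(1) dist(11)] by auto
    let ?S10 = "S9(1 := 0)"
    let ?S11 = "?S10(C := 0, 1 := ?S10 1 + ?S10 C)"
    have s10: "big Q (clear 1) S9 ?S10" by (rule big_clear)
    have s11: "big Q (mv C 1) ?S10 ?S11" by (rule big_mv) (use dist in auto)
    have v11: "?S11 0 = g ?x" "?S11 1 = f ?x" using v9 dist by auto
    obtain S12 where s12: "big Q PP ?S11 S12" "S12 0 = prod_encode (?S11 1, ?S11 0)" using big_PP by blast
    have "big Q (seqs [clear B, clear D, mv2 0 B D, mv D 0, cf, clear C, mv 0 C, mv B 0, cg, clear 1, mv C 1, PP]) R S12"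
      by (intro big_seqs_Cons[OF s1] big_seqs_Cons[OF s2] big_seqs_Cons[OF s3] big_seqs_Cons[OF s4]
         big_seqs_Cons[OF s5(1)] big_seqs_Cons[OF s6] big_seqs_Cons[OF s7] big_seqs_Cons[OF s8]
         big_seqs_Cons[OF s9(1)] big_seqs_Cons[OF s10] big_seqs_Cons[OF s11] big_seqs_Cons[OF s12(1)] big_seqs_Nil)
    then show "\<exists>R'. big Q (seqs [clear B, clear D, mv2 0 B D, mv D 0, cf, clear C, mv 0 C, mv B 0, cg, clear 1, mv C 1, PP]) R R' \<and>
        R' 0 = prod_encode (f (R 0), g (R 0))" using s12(2) v11 by metis
  qed
qed

lemma cf_iter0: "cf Q f \<Longrightarrow> cf Q (\<lambda>x. (f ^^ fst (prod_decode x)) (snd (prod_decode x)))"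
  unfolding cf_def
proof -
  assume "\<exists>c. \<forall>R. \<exists>R'. big Q c R R' \<and> R' 0 = f (R 0)"
  then obtain cf where cf: "\<And>R. \<exists>R'. big Q cf R R' \<and> R' 0 = f (R 0)" by blast
  define B where "B = max (rb cf) 3"
  have B: "rb cf \<le> B" "B \<noteq> 0" "B \<noteq> 1" unfolding B_def by auto
  show "\<exists>c. \<forall>R. \<exists>R'. big Q c R R' \<and> R' 0 = (f ^^ fst (prod_decode (R 0))) (snd (prod_decode (R 0)))"
  proof (rule exI, intro allI)
    fix R :: "nat \<Rightarrow> nat"
    let ?n = "fst (prod_decode (R 0))" and ?y = "snd (prod_decode (R 0))"
    obtain S1 where s1: "big Q U R S1" "S1 0 = ?y" "S1 1 = ?n" using big_U by blast
    let ?S2 = "S1(B := 0)"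
    let ?S3 = "?S2(1 := 0, B := ?S2 B + ?S2 1)"
    have s2: "big Q (clear B) S1 ?S2" by (rule big_clear)
    have s3: "big Q (mv 1 B) ?S2 ?S3" by (rule big_mv) (use B in auto)
    have "\<exists>R'. big Q (While B cf) ?S3 R' \<and> R' 0 = (f ^^ ?n) ?y"
    proof (rule while_rule[where I="\<lambda>S. S B \<le> ?n \<and> S 0 = (f ^^ (?n - S B)) ?y"])
      fix S :: "nat \<Rightarrow> nat" assume I: "S B \<le> ?n \<and> S 0 = (f ^^ (?n - S B)) ?y" and nz: "S B \<noteq> 0"
      obtain T where t: "big Q cf (S(B := S B - 1)) T" "T 0 = f ((S(B := S B - 1)) 0)" using cf by blast
      have tB: "T B = S B - 1" using frame[OF t(1) B(1)] by simp
      have e: "?n - (S B - 1) = Suc (?n - S B)" using I nz by simp arith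
      have "T 0 = (f ^^ (?n - T B)) ?y" using t(2) I B tB e by simp
      then show "\<exists>R1. big Q cf (S(B := S B - 1)) R1 \<and> (R1 B \<le> ?n \<and> R1 0 = (f ^^ (?n - R1 B)) ?y) \<and> R1 B < S B"
        using t(1) tB I nz by (intro exI[of _ T]) auto
    next
      fix S :: "nat \<Rightarrow> nat" assume "S B \<le> ?n \<and> S 0 = (f ^^ (?n - S B)) ?y" "S B = 0"
      then show "S 0 = (f ^^ ?n) ?y" by simp
    next
      show "?S3 B \<le> ?n \<and> ?S3 0 = (f ^^ (?n - ?S3 B)) ?y" using s1 B by simp
    qed
    then obtain S4 where s4: "big Q (While B cf) ?S3 S4" "S4 0 = (f ^^ ?n) ?y" by blast
    have "big Q (seqs [U, clear B, mv 1 B, While B cf]) R S4"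
      by (intro big_seqs_Cons[OF s1(1)] big_seqs_Cons[OF s2] big_seqs_Cons[OF s3] big_seqs_Cons[OF s4(1)] big_seqs_Nil)
    then show "\<exists>R'. big Q (seqs [U, clear B, mv 1 B, While B cf]) R R' \<and> R' 0 = (f ^^ ?n) ?y"
      using s4(2) by blast
  qed
qed



definition pr1 :: "nat \<Rightarrow> nat" where "pr1 x = fst (prod_decode x)"
definition pr2 :: "nat \<Rightarrow> nat" where "pr2 x = snd (prod_decode x)"
definition pe :: "nat \<Rightarrow> nat \<Rightarrow> nat" where "pe a b = prod_encode (a, b)"

lemma pr_pe[simp]: "pr1 (pe a b) = a" "pr2 (pe a b) = b"
  by (simp_all add: pr1_def pr2_def pe_def)
lemma pe_inj[simp]: "pe a b = pe c d \<longleftrightarrow> a = c \<and> b = d"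
  by (simp add: pe_def)
lemma pe_pr[simp]: "pe (pr1 x) (pr2 x) = x"
  by (simp add: pr1_def pr2_def pe_def)

named_theorems cfI


lemma cf_pe[cfI]: "cf Q f \<Longrightarrow> cf Q g \<Longrightarrow> cf Q (\<lambda>x. pe (f x) (g x))"
  unfolding pe_def by (rule cf_pair)
lemma cf_pr1[cfI]: "cf Q f \<Longrightarrow> cf Q (\<lambda>x. pr1 (f x))"
  unfolding pr1_def by (rule cf_comp[OF cf_fst0])
lemma cf_pr2[cfI]: "cf Q f \<Longrightarrow> cf Q (\<lambda>x. pr2 (f x))"
  unfolding pr2_def by (rule cf_comp[OF cf_snd0])
lemma cf_SucI[cfI]: "cf Q f \<Longrightarrow> cf Q (\<lambda>x. Suc (f x))"
  by (rule cf_comp[OF cf_Suc])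
lemma cf_idI[cfI]: "cf Q (\<lambda>x. x)" by (rule cf_id)
lemma cf_const[cfI]: "cf Q (\<lambda>x. c)"
  by (induction c) (auto intro: cf_zero cf_SucI)

lemma iterG: "((\<lambda>q. pe (pr1 q) (h (pr1 q) (pr2 q))) ^^ k) (pe p s) = pe p ((h p ^^ k) s)"
  by (induction k) auto

lemma cf_iter[cfI]:
  assumes h: "cf Q (\<lambda>q. h (pr1 q) (pr2 q))" and a: "cf Q a" and n: "cf Q n" and z: "cf Q z"
  shows "cf Q (\<lambda>x. (h (a x) ^^ n x) (z x))"
proof -
  let ?G = "\<lambda>q. pe (pr1 q) (h (pr1 q) (pr2 q))"
  have G: "cf Q ?G" by (intro cf_pe cf_pr1 cf_idI h)
  have I: "cf Q (\<lambda>y. (?G ^^ pr1 y) (pr2 y))" using cf_iter0[OF G] by (simp add: pr1_def pr2_def)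
  have "cf Q (\<lambda>x. pr2 ((\<lambda>y. (?G ^^ pr1 y) (pr2 y)) (pe (n x) (pe (a x) (z x)))))"
    by (intro cf_pr2 cf_comp[OF I] cf_pe a n z)
  then show ?thesis by (simp add: iterG)
qed

definition cf2 :: "orcl \<Rightarrow> (nat \<Rightarrow> nat \<Rightarrow> nat) \<Rightarrow> bool" where
  "cf2 Q h \<longleftrightarrow> cf Q (\<lambda>q. h (pr1 q) (pr2 q))"

lemma cf2_app: "cf2 Q h \<Longrightarrow> cf Q f \<Longrightarrow> cf Q g \<Longrightarrow> cf Q (\<lambda>x. h (f x) (g x))"
  unfolding cf2_def by (drule cf_comp[where g="\<lambda>x. pe (f x) (g x)"]) (auto intro: cf_pe)

lemma cf2_add: "cf2 Q (+)"
proof -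
  have "cf Q (\<lambda>q. ((\<lambda>s. Suc s) ^^ pr1 q) (pr2 q))"
    by (rule cf_iter[where h="\<lambda>_ s. Suc s"]) (auto intro!: cfI)
  moreover have "((\<lambda>s. Suc s) ^^ k) m = k + m" for k m by (induction k) auto
  ultimately show ?thesis unfolding cf2_def by simp
qed

lemma cf_add[cfI]: "cf Q f \<Longrightarrow> cf Q g \<Longrightarrow> cf Q (\<lambda>x. f x + g x)"
  by (rule cf2_app[OF cf2_add])

lemma cf_pred: "cf Q (\<lambda>x. x - 1)"
proof -
  let ?h = "\<lambda>(p::nat) s. pe (pr2 s) (Suc (pr2 s))"
  have "cf Q (\<lambda>x. pr1 ((?h 0 ^^ x) (pe 0 0)))"
    by (intro cfI cf_iter[where h="?h" and a="\<lambda>x. 0"])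
  moreover have "(?h 0 ^^ k) (pe 0 0) = pe (k - 1) k" for k by (induction k) auto
  ultimately show ?thesis by simp
qed

lemma cf2_sub: "cf2 Q (-)"
proof -
  have "cf Q (\<lambda>q. ((\<lambda>s. s - 1) ^^ pr2 q) (pr1 q))"
  proof (rule cf_iter[where h="\<lambda>_ s. s - 1"])
    show "cf Q (\<lambda>q. pr2 q - 1)" by (rule cf_comp[OF cf_pred, where g=pr2]) (rule cf_pr2[OF cf_idI])
  qed (auto intro!: cfI)
  moreover have "((\<lambda>s. s - 1) ^^ k) m = m - k" for k m :: nat by (induction k) auto
  ultimately show ?thesis unfolding cf2_def by simp
qed

lemma cf_sub[cfI]: "cf Q f \<Longrightarrow> cf Q g \<Longrightarrow> cf Q (\<lambda>x. f x - g x)"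
  by (rule cf2_app[OF cf2_sub])

lemma cf2_mult: "cf2 Q (*)"
proof -
  have "cf Q (\<lambda>q. ((\<lambda>s. s + pr2 q) ^^ pr1 q) 0)"
    by (rule cf_iter[where h="\<lambda>p s. s + p"]) (auto intro!: cfI)
  moreover have "((\<lambda>s. s + m) ^^ k) 0 = k * m" for k m :: nat by (induction k) auto
  ultimately show ?thesis unfolding cf2_def by simp
qed

lemma cf_mult[cfI]: "cf Q f \<Longrightarrow> cf Q g \<Longrightarrow> cf Q (\<lambda>x. f x * g x)"
  by (rule cf2_app[OF cf2_mult])

lemma cf_ifz: "cf Q f \<Longrightarrow> cf Q g \<Longrightarrow> cf Q h \<Longrightarrow> cf Q (\<lambda>x. if f x = 0 then g x else h x)"
proof -
  assume f: "cf Q f" and g: "cf Q g" and h: "cf Q h"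
  have "cf Q (\<lambda>x. ((\<lambda>s. h x) ^^ (1 - (1 - f x))) (g x))"
    by (rule cf_iter[where h="\<lambda>p s. p"]) (auto intro!: cfI f g h)
  moreover have "((\<lambda>s. h x) ^^ (1 - (1 - f x))) (g x) = (if f x = 0 then g x else h x)" for x
    by (cases "f x") auto
  ultimately show ?thesis by simp
qed

definition cp :: "orcl \<Rightarrow> (nat \<Rightarrow> bool) \<Rightarrow> bool" where
  "cp Q P \<longleftrightarrow> cf Q (\<lambda>x. if P x then 1 else 0)"

named_theorems cpI

lemma cf_if[cfI]: "cp Q P \<Longrightarrow> cf Q g \<Longrightarrow> cf Q h \<Longrightarrow> cf Q (\<lambda>x. if P x then g x else h x)"
proof -
  assume "cp Q P" "cf Q g" "cf Q h"
  then have "cf Q (\<lambda>x. if (if P x then 1 else 0) = (0::nat) then h x else g x)"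
    unfolding cp_def by (intro cf_ifz)
  moreover have "(\<lambda>x. if (if P x then 1 else 0) = (0::nat) then h x else g x) = (\<lambda>x. if P x then g x else h x)"
    by auto
  ultimately show ?thesis by simp
qed

lemma cp_eq[cpI]: "cf Q f \<Longrightarrow> cf Q g \<Longrightarrow> cp Q (\<lambda>x. f x = g x)"
proof -
  assume f: "cf Q f" and g: "cf Q g"
  have "cf Q (\<lambda>x. 1 - ((f x - g x) + (g x - f x)))" by (intro cfI f g)
  moreover have "1 - ((f x - g x) + (g x - f x)) = (if f x = g x then 1 else 0)" for x by auto
  ultimately show ?thesis unfolding cp_def by simp
qed

lemma cp_less[cpI]: "cf Q f \<Longrightarrow> cf Q g \<Longrightarrow> cp Q (\<lambda>x. f x < g x)"
proof -
  assume f: "cf Q f" and g: "cf Q g"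
  have "cf Q (\<lambda>x. 1 - (1 - (g x - f x)))" by (intro cfI f g)
  moreover have "1 - (1 - (g x - f x)) = (if f x < g x then 1 else 0)" for x by auto
  ultimately show ?thesis unfolding cp_def by simp
qed

lemma cp_le[cpI]: "cf Q f \<Longrightarrow> cf Q g \<Longrightarrow> cp Q (\<lambda>x. f x \<le> g x)"
  using cp_less[of Q f "\<lambda>x. Suc (g x)"] by (simp add: less_Suc_eq_le cf_SucI)

lemma cp_not[cpI]: "cp Q P \<Longrightarrow> cp Q (\<lambda>x. \<not> P x)"
proof -
  assume "cp Q P"
  then have "cf Q (\<lambda>x. 1 - (if P x then 1 else 0))" unfolding cp_def by (rule cf_sub[OF cf_const])
  moreover have "(\<lambda>x. 1 - (if P x then 1 else 0)) = (\<lambda>x. if \<not> P x then 1 else (0::nat))" by auto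
  ultimately show ?thesis unfolding cp_def by simp
qed

lemma cp_and[cpI]: "cp Q P \<Longrightarrow> cp Q P' \<Longrightarrow> cp Q (\<lambda>x. P x \<and> P' x)"
proof -
  assume "cp Q P" "cp Q P'"
  then have "cf Q (\<lambda>x. (if P x then 1 else 0) * (if P' x then 1 else 0))" unfolding cp_def by (rule cf_mult)
  moreover have "(\<lambda>x. (if P x then 1 else 0) * (if P' x then 1 else 0)) = (\<lambda>x. if P x \<and> P' x then 1 else (0::nat))" by auto
  ultimately show ?thesis unfolding cp_def by simp
qed

lemma cp_or[cpI]: "cp Q P \<Longrightarrow> cp Q P' \<Longrightarrow> cp Q (\<lambda>x. P x \<or> P' x)"
proof -
  assume "cp Q P" "cp Q P'"
  then have "cp Q (\<lambda>x. \<not> (\<not> P x \<and> \<not> P' x))" by (intro cp_not cp_and)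
  then show ?thesis by simp
qed

lemma cp_cf: "cp Q P \<Longrightarrow> cf Q (\<lambda>x. if P x then 1 else 0)" by (simp add: cp_def)



lemma cp2_app: "cp Q (\<lambda>q. P (pr1 q) (pr2 q)) \<Longrightarrow> cf Q f \<Longrightarrow> cf Q g \<Longrightarrow> cp Q (\<lambda>x. P (f x) (g x))"
  unfolding cp_def by (drule cf_comp[where g="\<lambda>x. pe (f x) (g x)"]) (auto intro: cf_pe)

definition bmin :: "nat \<Rightarrow> (nat \<Rightarrow> bool) \<Rightarrow> nat" where
  "bmin b P = (if \<exists>t<b. P t then LEAST t. P t else b)"

definition bstep :: "(nat \<Rightarrow> nat \<Rightarrow> bool) \<Rightarrow> nat \<Rightarrow> nat \<Rightarrow> nat" where
  "bstep P p st = pe (Suc (pr1 st)) (if pr2 st = pr2 p \<and> P (pr1 p) (pr1 st) then pr1 st else pr2 st)"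

lemma bstep_iter: "k \<le> b \<Longrightarrow> (bstep P (pe a b) ^^ k) (pe 0 b) = pe k (bmin b (\<lambda>t. t < k \<and> P a t))"
proof (induction k)
  case 0 then show ?case by (simp add: bmin_def)
next
  case (Suc k)
  then have IH: "(bstep P (pe a b) ^^ k) (pe 0 b) = pe k (bmin b (\<lambda>t. t < k \<and> P a t))" by simp
  have S: "(bstep P (pe a b) ^^ Suc k) (pe 0 b) = bstep P (pe a b) (pe k (bmin b (\<lambda>t. t < k \<and> P a t)))"
    using IH by simp
  show ?case
  proof (cases "\<exists>t<k. P a t")
    case True
    then obtain t where t: "t < k" "P a t" by blast
    define m where "m = (LEAST t. t < k \<and> P a t)"
    have mI: "m < k \<and> P a m" unfolding m_def by (rule LeastI[of _ t]) (use t in simp)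
    have mle: "\<And>y. y < k \<and> P a y \<Longrightarrow> m \<le> y" unfolding m_def by (rule Least_le)
    have l1: "m = (LEAST t. t < Suc k \<and> P a t)"
    proof (rule Least_equality[symmetric])
      show "m < Suc k \<and> P a m" using mI by simp
      fix y assume y: "y < Suc k \<and> P a y"
      show "m \<le> y"
      proof (cases "y < k")
        case True then show ?thesis using mle y by simp
      next
        case False then show ?thesis using mI by simp
      qed
    qed
    have lk: "m < k" using mI by simp
    then have ne: "m \<noteq> b" using Suc.prems by simp
    have b1: "bmin b (\<lambda>t. t < k \<and> P a t) = m"
      unfolding bmin_def m_def using t Suc.prems by auto
    have b2: "bmin b (\<lambda>t. t < Suc k \<and> P a t) = m"
      unfolding bmin_def l1 using t Suc.prems by auto
    show ?thesis unfolding S using b1 b2 ne by (simp add: bstep_def)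
  next
    case False
    have b1: "bmin b (\<lambda>t. t < k \<and> P a t) = b" unfolding bmin_def using False by auto
    show ?thesis
    proof (cases "P a k")
      case True
      have "(LEAST t. t < Suc k \<and> P a t) = k"
        by (rule Least_equality) (use True False in \<open>auto simp: less_Suc_eq\<close>)
      then have "bmin b (\<lambda>t. t < Suc k \<and> P a t) = k" unfolding bmin_def using True Suc.prems by auto
      then show ?thesis unfolding S using b1 True by (simp add: bstep_def)
    next
      case False': False
      have "bmin b (\<lambda>t. t < Suc k \<and> P a t) = b" unfolding bmin_def using False False'
        by (auto simp: less_Suc_eq)
      then show ?thesis unfolding S using b1 False' by (simp add: bstep_def)
    qed
  qed
qed

lemma bmin_restrict: "bmin b (\<lambda>t. t < b \<and> P t) = bmin b P"
proof -
  have "(\<exists>t<b. t < b \<and> P t) = (\<exists>t<b. P t)" by auto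
  moreover have "(LEAST t. t < b \<and> P t) = (LEAST t. P t)" if ex: "\<exists>t<b. P t"
  proof -
    obtain t where t: "t < b" "P t" using ex by blast
    have l: "(LEAST t. P t) \<le> t" using t by (simp add: Least_le)
    have p: "P (LEAST t. P t)" using t by (metis LeastI)
    show ?thesis
    proof (rule Least_equality)
      show "(LEAST t. P t) < b \<and> P (LEAST t. P t)" using l t p by simp
      fix y assume "y < b \<and> P y" then show "(LEAST t. P t) \<le> y" by (simp add: Least_le)
    qed
  qed
  ultimately show ?thesis unfolding bmin_def by auto
qed

lemma cf_bmin[cfI]:
  assumes P: "cp Q (\<lambda>q. P (pr1 q) (pr2 q))" and a: "cf Q a" and b: "cf Q b"
  shows "cf Q (\<lambda>x. bmin (b x) (P (a x)))"
proof -
  have h: "cf Q (\<lambda>q. bstep P (pr1 q) (pr2 q))" unfolding bstep_def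
    by (intro cfI cpI cp2_app[OF P]) 
  have "cf Q (\<lambda>x. pr2 ((bstep P (pe (a x) (b x)) ^^ b x) (pe 0 (b x))))"
    by (intro cfI cf_iter[OF h] a b)
  moreover have "pr2 ((bstep P (pe (a x) (b x)) ^^ b x) (pe 0 (b x))) = bmin (b x) (P (a x))" for x
    by (simp add: bstep_iter bmin_restrict)
  ultimately show ?thesis by simp
qed

lemma bmin_less: "bmin b P < b \<longleftrightarrow> (\<exists>t<b. P t)"
proof
  assume "bmin b P < b" then show "\<exists>t<b. P t" unfolding bmin_def by (auto split: if_splits)
next
  assume "\<exists>t<b. P t"
  then obtain t where t: "t < b" "P t" by blast
  then have "(LEAST t. P t) \<le> t" by (simp add: Least_le)
  then show "bmin b P < b" unfolding bmin_def using t by auto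
qed

lemma bmin_eq: "\<exists>t<b. P t \<Longrightarrow> bmin b P = (LEAST t. P t)"
  unfolding bmin_def by auto

lemma cp_ex[cpI]:
  assumes P: "cp Q (\<lambda>q. P (pr1 q) (pr2 q))" and a: "cf Q a" and b: "cf Q b"
  shows "cp Q (\<lambda>x. \<exists>t<b x. P (a x) t)"
proof -
  have "cp Q (\<lambda>x. bmin (b x) (P (a x)) < b x)" by (intro cpI cf_bmin[OF P a b] b)
  then show ?thesis by (simp add: bmin_less)
qed

section \<open>List codes\<close>

declare cf_pair[cfI]

definition hdc :: "nat \<Rightarrow> nat" where "hdc x = pr1 (x - 1)"
definition tlc :: "nat \<Rightarrow> nat" where "tlc x = pr2 (x - 1)"
definition consc :: "nat \<Rightarrow> nat \<Rightarrow> nat" where "consc a y = Suc (pe a y)"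

lemma hdc_Suc[simp]: "hdc (Suc (prod_encode (a, y))) = a" by (simp add: hdc_def pr1_def)
lemma tlc_Suc[simp]: "tlc (Suc (prod_encode (a, y))) = y" by (simp add: tlc_def pr2_def)
lemma consc_eq[simp]: "consc a y = Suc (prod_encode (a, y))" by (simp add: consc_def pe_def)

lemma hdc_enc[simp]: "hdc (list_encode (a # l)) = a"
  by (simp add: hdc_def pr1_def)
lemma tlc_enc[simp]: "tlc (list_encode l) = list_encode (tl l)"
  by (cases l) (simp_all add: tlc_def pr2_def)
lemma consc_enc[simp]: "consc a (list_encode l) = list_encode (a # l)"
  by (simp add: consc_def pe_def)
lemma tlc_iter: "(tlc ^^ k) (list_encode l) = list_encode (drop k l)"
  by (induction k) (auto simp: drop_Suc tl_drop)

lemma cf_hdc[cfI]: "cf Q f \<Longrightarrow> cf Q (\<lambda>x. hdc (f x))"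
  unfolding hdc_def by (intro cfI)
lemma cf_tlc[cfI]: "cf Q f \<Longrightarrow> cf Q (\<lambda>x. tlc (f x))"
  unfolding tlc_def by (intro cfI)
lemma cf_consc[cfI]: "cf Q f \<Longrightarrow> cf Q g \<Longrightarrow> cf Q (\<lambda>x. consc (f x) (g x))"
  unfolding consc_def by (intro cfI)

definition nthc :: "nat \<Rightarrow> nat \<Rightarrow> nat" where "nthc x i = hdc ((tlc ^^ i) x)"

lemma nthc_enc: "i < length l \<Longrightarrow> nthc (list_encode l) i = l ! i"
  unfolding nthc_def tlc_iter by (simp add: Cons_nth_drop_Suc[symmetric])

lemma cf_nthc[cfI]: "cf Q f \<Longrightarrow> cf Q g \<Longrightarrow> cf Q (\<lambda>x. nthc (f x) (g x))"
  unfolding nthc_def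
  by (intro cf_hdc cf_iter[where h="\<lambda>_ s. tlc s" and a="\<lambda>x. 0"]) (auto intro!: cfI)

definition lstep :: "nat \<Rightarrow> nat \<Rightarrow> nat" where
  "lstep p s = pe (tlc (pr1 s)) (pr2 s + (if pr1 s = 0 then 0 else 1))"

definition lenc :: "nat \<Rightarrow> nat" where "lenc x = pr2 ((lstep 0 ^^ x) (pe x 0))"

lemma length_le_enc: "length l \<le> list_encode l"
  by (induction l) (auto simp: le_prod_encode_2 intro: le_trans[OF _ le_prod_encode_2])

lemma lstep_iter: "(lstep 0 ^^ k) (pe (list_encode l) 0) = pe (list_encode (drop k l)) (min k (length l))"
proof (induction k)
  case 0 then show ?case by simp
next
  case (Suc k)
  have "list_encode (drop k l) = 0 \<longleftrightarrow> length l \<le> k"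
    by (metis drop_eq_Nil list_encode.simps(1) list_encode_eq)
  then show ?case using Suc by (auto simp: lstep_def drop_Suc tl_drop min_def)
qed

lemma lenc_enc[simp]: "lenc (list_encode l) = length l"
  unfolding lenc_def lstep_iter using length_le_enc[of l] by simp

lemma cf_lenc[cfI]: "cf Q f \<Longrightarrow> cf Q (\<lambda>x. lenc (f x))"
  unfolding lenc_def
  by (intro cf_pr2 cf_iter[where h=lstep and a="\<lambda>x. 0"]) (auto intro!: cfI cpI simp: lstep_def)

definition ustep1 :: "nat \<Rightarrow> nat \<Rightarrow> nat" where
  "ustep1 p s = pe (consc (hdc (pr2 s)) (pr1 s)) (tlc (pr2 s))"
definition ustep2 :: "nat \<Rightarrow> nat \<Rightarrow> nat" where
  "ustep2 p s = pe (tlc (pr1 s)) (consc (hdc (pr1 s)) (pr2 s))"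
definition updc :: "nat \<Rightarrow> nat \<Rightarrow> nat \<Rightarrow> nat" where
  "updc l i v = pr2 ((ustep2 0 ^^ i) (pe (pr1 ((ustep1 0 ^^ i) (pe 0 l))) (consc v (tlc (pr2 ((ustep1 0 ^^ i) (pe 0 l)))))))"

lemma ustep1_iter: "k \<le> length Z \<Longrightarrow>
  (ustep1 0 ^^ k) (pe (list_encode Y) (list_encode Z)) = pe (list_encode (rev (take k Z) @ Y)) (list_encode (drop k Z))"
proof (induction k)
  case 0 then show ?case by simp
next
  case (Suc k)
  then have k: "k < length Z" by simp
  then have d: "drop k Z = Z ! k # drop (Suc k) Z" by (simp add: Cons_nth_drop_Suc)
  show ?case using Suc k by (simp add: ustep1_def d take_Suc_conv_app_nth)
qed

lemma ustep2_iter: "k \<le> length X \<Longrightarrow>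
  (ustep2 0 ^^ k) (pe (list_encode X) (list_encode B)) = pe (list_encode (drop k X)) (list_encode (rev (take k X) @ B))"
proof (induction k)
  case 0 then show ?case by simp
next
  case (Suc k)
  then have k: "k < length X" by simp
  then have d: "drop k X = X ! k # drop (Suc k) X" by (simp add: Cons_nth_drop_Suc)
  show ?case using Suc k by (simp add: ustep2_def d take_Suc_conv_app_nth)
qed

lemma updc_enc: "i < length L \<Longrightarrow> updc (list_encode L) i v = list_encode (L[i := v])"
proof -
  assume i: "i < length L"
  have 1: "(ustep1 0 ^^ i) (pe 0 (list_encode L)) = pe (list_encode (rev (take i L))) (list_encode (drop i L))"
    using ustep1_iter[of i L "[]"] i by simp
  have d: "drop i L = L ! i # drop (Suc i) L" using i by (simp add: Cons_nth_drop_Suc)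
  have 2: "(ustep2 0 ^^ i) (pe (list_encode (rev (take i L))) (list_encode (v # drop (Suc i) L))) =
     pe (list_encode (drop i (rev (take i L)))) (list_encode (take i L @ v # drop (Suc i) L))"
    using ustep2_iter[of i "rev (take i L)" "v # drop (Suc i) L"] i by simp
  show ?thesis unfolding updc_def 1 using 2 d by (simp add: upd_conv_take_nth_drop i)
qed

lemma cf_updc[cfI]: "cf Q f \<Longrightarrow> cf Q g \<Longrightarrow> cf Q h \<Longrightarrow> cf Q (\<lambda>x. updc (f x) (g x) (h x))"
  unfolding updc_def
  by (intro cf_pr2 cf_pr1 cf_pe cf_consc cf_tlc cf_iter[where h=ustep2 and a="\<lambda>x. 0"]
        cf_iter[where h=ustep1 and a="\<lambda>x. 0"]) (auto intro!: cfI simp: ustep1_def ustep2_def)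



lemma div3_char: "bmin (Suc x) (\<lambda>q. x < 3 * Suc q) = x div 3"
proof -
  have iff: "x < 3 * Suc q \<longleftrightarrow> x div 3 \<le> q" for q :: nat
    by (simp add: div_less_iff_less_mult less_Suc_eq_le[symmetric] mult.commute)
  have ex: "\<exists>t<Suc x. x < 3 * Suc t" using iff[of "x div 3"] by (intro exI[of _ "x div 3"]) auto
  have "(LEAST q. x < 3 * Suc q) = x div 3"
    by (rule Least_equality) (auto simp: iff)
  then show ?thesis using bmin_eq[OF ex] by simp
qed

lemma cf_div3[cfI]: "cf Q f \<Longrightarrow> cf Q (\<lambda>x. f x div 3)"
proof -
  assume f: "cf Q f"
  have "cp Q (\<lambda>q. pr1 q < 3 * Suc (pr2 q))" by (intro cpI cfI)
  then have "cf Q (\<lambda>x. bmin (Suc (f x)) (\<lambda>q. f x < 3 * Suc q))"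
    using cf_bmin[where P="\<lambda>a q. a < 3 * Suc q" and a=f and b="\<lambda>x. Suc (f x)"] f by (auto intro: cfI)
  then show ?thesis by (simp only: div3_char)
qed

lemma cf_mod3[cfI]: "cf Q f \<Longrightarrow> cf Q (\<lambda>x. f x mod 3)"
proof -
  assume f: "cf Q f"
  have "cf Q (\<lambda>x. f x - 3 * (f x div 3))" by (intro cfI f)
  then show ?thesis by (simp add: minus_div_mult_eq_mod[symmetric] mult.commute)
qed

lemma cf_min[cfI]: "cf Q f \<Longrightarrow> cf Q g \<Longrightarrow> cf Q (\<lambda>x. min (f x) (g x))"
proof -
  assume f: "cf Q f" and g: "cf Q g"
  have "cf Q (\<lambda>x. if f x \<le> g x then f x else g x)" by (intro cfI cpI f g)
  then show ?thesis by (simp add: min_def)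
qed

definition cstep :: "nat \<Rightarrow> nat \<Rightarrow> nat" where
"cstep E e = (
  if pr1 e \<noteq> 0 then e else if lenc (pr1 E) \<le> pr1 (pr2 e) then e else
   (if nthc (pr1 E) (pr1 (pr2 e)) mod 3 = 0 then
      pe 0 (pe (pr2 (nthc (pr1 E) (pr1 (pr2 e)) div 3))
        (updc (pr2 (pr2 e)) (pr1 (nthc (pr1 E) (pr1 (pr2 e)) div 3))
              (Suc (nthc (pr2 (pr2 e)) (pr1 (nthc (pr1 E) (pr1 (pr2 e)) div 3))))))
   else if nthc (pr1 E) (pr1 (pr2 e)) mod 3 = 1 then
      (if nthc (pr2 (pr2 e)) (pr1 (nthc (pr1 E) (pr1 (pr2 e)) div 3)) = 0
       then pe 0 (pe (pr2 (pr2 (nthc (pr1 E) (pr1 (pr2 e)) div 3))) (pr2 (pr2 e)))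
       else pe 0 (pe (pr1 (pr2 (nthc (pr1 E) (pr1 (pr2 e)) div 3)))
              (updc (pr2 (pr2 e)) (pr1 (nthc (pr1 E) (pr1 (pr2 e)) div 3))
                 (nthc (pr2 (pr2 e)) (pr1 (nthc (pr1 E) (pr1 (pr2 e)) div 3)) - 1))))
   else
      (if nthc (pr2 (pr2 e)) (pr1 (nthc (pr1 E) (pr1 (pr2 e)) div 3)) < min (pr2 (pr2 E)) (lenc (pr1 (pr2 E)))
       then pe 0 (pe (pr2 (nthc (pr1 E) (pr1 (pr2 e)) div 3))
              (updc (pr2 (pr2 e)) (pr1 (nthc (pr1 E) (pr1 (pr2 e)) div 3))
                 (nthc (pr1 (pr2 E)) (lenc (pr1 (pr2 E)) - 1 - nthc (pr2 (pr2 e)) (pr1 (nthc (pr1 E) (pr1 (pr2 e)) div 3))))))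
       else pe 1 0)))"

lemma cf_cstep: "cf Q (\<lambda>q. cstep (pr1 q) (pr2 q))"
  unfolding cstep_def by (intro cfI cpI)



lemma list_decode_le: "x \<in> set (list_decode n) \<Longrightarrow> x \<le> n"
proof (induction n rule: list_decode.induct)
  case 1 then show ?case by simp
next
  case (2 n)
  obtain a b where ab: "prod_decode n = (a, b)" by fastforce
  have ne: "prod_encode (a, b) = n" using ab by (metis prod_decode_inverse)
  have a: "a \<le> n" "b \<le> n" using le_prod_encode_1[of a b] le_prod_encode_2[of b a] ne by auto
  show ?case using 2 ab a by (auto split: prod.splits)
qed

lemma pr1_le: "pr1 x \<le> x" unfolding pr1_def by (metis le_prod_encode_1 prod.collapse prod_decode_inverse)
lemma pr2_le: "pr2 x \<le> x" unfolding pr2_def by (metis le_prod_encode_2 prod.collapse prod_decode_inverse)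

lemma nthc_dec: "i < length (list_decode x) \<Longrightarrow> nthc x i = list_decode x ! i"
  using nthc_enc[of i "list_decode x"] by simp
lemma lenc_dec: "lenc x = length (list_decode x)"
  using lenc_enc[of "list_decode x"] by simp

definition rep :: "nat \<Rightarrow> config option \<Rightarrow> nat \<Rightarrow> bool" where
"rep n cfg e \<longleftrightarrow> (case cfg of None \<Rightarrow> pr1 e \<noteq> 0
   | Some (pc, R) \<Rightarrow> (\<exists>rl. e = pe 0 (pe pc (list_encode rl)) \<and> length rl = Suc n \<and>
        (\<forall>r. R r = (if r < Suc n then rl ! r else 0))))"

lemma decode_instr_cases: "decode_instr w =
  (if w mod 3 = 0 then Inc (pr1 (w div 3)) (pr2 (w div 3))
   else if w mod 3 = 1 then Dec (pr1 (w div 3)) (pr1 (pr2 (w div 3))) (pr2 (pr2 (w div 3)))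
   else Orc (pr1 (w div 3)) (pr2 (w div 3)))"
  by (simp add: decode_instr_def pr1_def pr2_def Let_def)

lemma rep_step:
  fixes n c t :: nat
  defines "\<tau> \<equiv> rev (list_decode c)"
  assumes r: "rep n (Some (pc, R)) e"
  shows "rep n (step (machine n) (str_orc (take t \<tau>)) (pc, R)) (cstep (pe n (pe c t)) e)"
proof -
  from r obtain rl where e: "e = pe 0 (pe pc (list_encode rl))" and len: "length rl = Suc n"
     and R: "\<And>r. R r = (if r < Suc n then rl ! r else 0)" unfolding rep_def by auto
  let ?p = "machine n"
  have lp: "length ?p = lenc n" by (simp add: machine_def lenc_dec)
  show ?thesis
  proof (cases "lenc n \<le> pc")
    case True
    then have "step ?p (str_orc (take t \<tau>)) (pc, R) = Some (pc, R)" using lp by (simp add: step_def)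
    moreover have "cstep (pe n (pe c t)) e = e" using True e by (simp add: cstep_def)
    ultimately show ?thesis using r by simp
  next
    case False
    let ?w = "list_decode n ! pc"
    have pcl: "pc < length (list_decode n)" using False by (simp add: lenc_dec)
    have w: "nthc n pc = ?w" using pcl by (rule nthc_dec)
    have wle: "?w \<le> n" using list_decode_le[of ?w n] pcl by simp
    have pw: "?p ! pc = decode_instr ?w" using pcl by (simp add: machine_def)
    let ?b = "?w div 3"
    have ble: "?b \<le> n" using wle by simp
    let ?r = "pr1 ?b"
    have rle: "?r < Suc n" using pr1_le[of ?b] ble by simp
    have nr: "nthc (list_encode rl) ?r = R ?r" using rle len R by (simp add: nthc_enc)
    have upd: "\<And>v. updc (list_encode rl) ?r v = list_encode (rl[?r := v])" using rle len by (simp add: updc_enc)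
    have Rupd: "\<And>v r. (R(?r := v)) r = (if r < Suc n then rl[?r := v] ! r else 0)"
      using R rle len by (auto simp: nth_list_update)
    have pcl2: "pc < length ?p" using pcl by (simp add: machine_def)
    show ?thesis
    proof (cases "?w mod 3 = 0")
      case True
      have "step ?p (str_orc (take t \<tau>)) (pc, R) = Some (pr2 ?b, R(?r := Suc (R ?r)))"
        using pcl2 pw True by (simp add: step_def decode_instr_cases)
      moreover have "cstep (pe n (pe c t)) e = pe 0 (pe (pr2 ?b) (list_encode (rl[?r := Suc (R ?r)])))"
        using False True e w nr upd by (simp add: cstep_def)
      ultimately show ?thesis unfolding rep_def using len Rupd by auto
    next
      case F1: False
      show ?thesis
      proof (cases "?w mod 3 = 1")
        case True
        show ?thesis
        proof (cases "R ?r = 0")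
          case z: True
          have "step ?p (str_orc (take t \<tau>)) (pc, R) = Some (pr2 (pr2 ?b), R)"
            using pcl2 pw True z by (simp add: step_def decode_instr_cases)
          moreover have "cstep (pe n (pe c t)) e = pe 0 (pe (pr2 (pr2 ?b)) (list_encode rl))"
            using False True F1 e w nr z by (simp add: cstep_def)
          ultimately show ?thesis unfolding rep_def using len R by auto
        next
          case z: False
          have "step ?p (str_orc (take t \<tau>)) (pc, R) = Some (pr1 (pr2 ?b), R(?r := R ?r - 1))"
            using pcl2 pw True z by (simp add: step_def decode_instr_cases)
          moreover have "cstep (pe n (pe c t)) e = pe 0 (pe (pr1 (pr2 ?b)) (list_encode (rl[?r := R ?r - 1])))"
            using False True F1 e w nr upd z by (simp add: cstep_def)
          ultimately show ?thesis unfolding rep_def using len Rupd by auto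
        qed
      next
        case F2: False
        let ?i = "R ?r"
        let ?L = "list_decode c"
        have lt: "length (take t \<tau>) = min t (lenc c)" by (simp add: \<tau>_def lenc_dec)
        show ?thesis
        proof (cases "?i < min t (lenc c)")
          case True
          have il: "?i < length ?L" using True by (simp add: lenc_dec)
          have tv: "take t \<tau> ! ?i = ?L ! (length ?L - Suc ?i)" using True il
            by (simp add: \<tau>_def rev_nth)
          have nc: "nthc c (lenc c - 1 - ?i) = ?L ! (length ?L - Suc ?i)"
            using il by (simp add: lenc_dec nthc_dec)
          have "step ?p (str_orc (take t \<tau>)) (pc, R) = Some (pr2 ?b, R(?r := ?L ! (length ?L - Suc ?i)))"
            using pcl2 pw F1 F2 True lt tv by (simp add: step_def decode_instr_cases str_orc_def)
          moreover have "cstep (pe n (pe c t)) e = pe 0 (pe (pr2 ?b) (list_encode (rl[?r := ?L ! (length ?L - Suc ?i)])))"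
            using False F1 F2 True e w nr upd nc by (simp add: cstep_def)
          ultimately show ?thesis unfolding rep_def using len Rupd by auto
        next
          case F3: False
          have "step ?p (str_orc (take t \<tau>)) (pc, R) = None"
            using pcl2 pw F1 F2 F3 lt by (simp add: step_def decode_instr_cases str_orc_def)
          moreover have "cstep (pe n (pe c t)) e = pe 1 0"
            using False F1 F2 F3 e w nr by (simp add: cstep_def)
          ultimately show ?thesis unfolding rep_def by auto
        qed
      qed
    qed
  qed
qed

definition e0 :: "nat \<Rightarrow> nat" where "e0 n = pe 0 (pe 0 (list_encode (n # replicate n 0)))"

lemma rep_run:
  fixes n c t :: nat
  defines "\<tau> \<equiv> rev (list_decode c)"
  shows "rep n (run (machine n) (str_orc (take t \<tau>)) s (0, init n)) ((cstep (pe n (pe c t)) ^^ s) (e0 n))"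
proof (induction s)
  case 0
  show ?case unfolding rep_def e0_def
    by (simp, intro exI[of _ "n # replicate n 0"]) (auto simp: init_def nth_Cons')
next
  case (Suc s)
  show ?case
  proof (cases "run (machine n) (str_orc (take t \<tau>)) s (0, init n)")
    case None
    then have "pr1 ((cstep (pe n (pe c t)) ^^ s) (e0 n)) \<noteq> 0" using Suc by (simp add: rep_def)
    moreover have st: "pr1 (cstep E x) \<noteq> 0" if "pr1 x \<noteq> 0" for E x using that by (simp add: cstep_def)
    ultimately show ?thesis using None by (simp add: rep_def)
  next
    case (Some cfg)
    obtain pc R where cfg: "cfg = (pc, R)" by fastforce
    show ?thesis using rep_step[where n=n and c=c and t=t and pc=pc and R=R] Suc Some cfg unfolding \<tau>_def by simp
  qed
qed

lemma halted_mono: assumes h: "halted_at p Q x s" shows "s \<le> s' \<Longrightarrow> halted_at p Q x s'"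
proof (induction s' rule: dec_induct)
  case base then show ?case using h by simp
next
  case (step s')
  then obtain pc R where "run p Q s' (0, init x) = Some (pc, R)" "length p \<le> pc"
    unfolding halted_at_def by (auto split: option.splits)
  then show ?case unfolding halted_at_def by (simp add: step_def)
qed

lemma conv_iff: "conv n \<tau> \<longleftrightarrow> 0 < length \<tau> \<and> halted_at (machine n) (str_orc \<tau>) n (length \<tau> - 1)"
  unfolding conv_def
proof
  assume "\<exists>s<length \<tau>. halted_at (machine n) (str_orc \<tau>) n s"
  then obtain s where "s < length \<tau>" "halted_at (machine n) (str_orc \<tau>) n s" by blast
  then show "0 < length \<tau> \<and> halted_at (machine n) (str_orc \<tau>) n (length \<tau> - 1)"
    using halted_mono by fastforce
next
  assume "0 < length \<tau> \<and> halted_at (machine n) (str_orc \<tau>) n (length \<tau> - 1)"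
  then show "\<exists>s<length \<tau>. halted_at (machine n) (str_orc \<tau>) n s"
    by (intro exI[of _ "length \<tau> - 1"]) auto
qed

definition convc :: "nat \<Rightarrow> nat \<Rightarrow> nat \<Rightarrow> bool" where
  "convc n c t \<longleftrightarrow> 0 < min t (lenc c) \<and>
     pr1 ((cstep (pe n (pe c t)) ^^ (min t (lenc c) - 1)) (e0 n)) = 0 \<and>
     lenc n \<le> pr1 (pr2 ((cstep (pe n (pe c t)) ^^ (min t (lenc c) - 1)) (e0 n)))"

lemma convc_iff: "convc n c t \<longleftrightarrow> conv n (take t (rev (list_decode c)))"
proof -
  let ?\<tau> = "rev (list_decode c)"
  let ?s = "min t (lenc c) - 1"
  have lt: "length (take t ?\<tau>) = min t (lenc c)" by (simp add: lenc_dec)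
  have r: "rep n (run (machine n) (str_orc (take t ?\<tau>)) ?s (0, init n)) ((cstep (pe n (pe c t)) ^^ ?s) (e0 n))"
    by (rule rep_run)
  have lp: "length (machine n) = lenc n" by (simp add: machine_def lenc_dec)
  have "halted_at (machine n) (str_orc (take t ?\<tau>)) n ?s \<longleftrightarrow>
        pr1 ((cstep (pe n (pe c t)) ^^ ?s) (e0 n)) = 0 \<and> lenc n \<le> pr1 (pr2 ((cstep (pe n (pe c t)) ^^ ?s) (e0 n)))"
    using r lp unfolding halted_at_def rep_def by (auto split: option.splits)
  then show ?thesis unfolding convc_def conv_iff lt by simp
qed

lemma cf_e0[cfI]: "cf Q f \<Longrightarrow> cf Q (\<lambda>x. e0 (f x))"
proof -
  assume f: "cf Q f"
  have "cf Q (\<lambda>x. pe 0 (pe 0 (consc (f x) (((\<lambda>s. consc 0 s) ^^ f x) 0))))"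
    by (intro cfI cf_iter[where h="\<lambda>_ s. consc 0 s" and a="\<lambda>x. 0"] f) (auto intro!: cfI simp del: consc_eq)
  moreover have "((\<lambda>s. consc 0 s) ^^ k) 0 = list_encode (replicate k 0)" for k
    by (induction k) auto
  ultimately show ?thesis unfolding e0_def by (simp del: consc_eq add: consc_enc)
qed

lemma cp_convc[cpI]: "cf Q f \<Longrightarrow> cf Q g \<Longrightarrow> cf Q h \<Longrightarrow> cp Q (\<lambda>x. convc (f x) (g x) (h x))"
  unfolding convc_def by (intro cpI cfI cf_iter[OF cf_cstep])



definition tnc :: "nat \<Rightarrow> nat \<Rightarrow> nat \<Rightarrow> nat" where
  "tnc c n prev = (if bmin (Suc (lenc c)) (convc n c) < Suc (lenc c)
                   then max (prev + 1) (bmin (Suc (lenc c)) (convc n c)) else prev + 1)"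

lemma tnc_eq: "tnc c n prev = tnext (rev (list_decode c)) n prev"
proof -
  let ?\<tau> = "rev (list_decode c)"
  have len: "lenc c = length ?\<tau>" by (simp add: lenc_dec)
  have cv: "convc n c = (\<lambda>t. conv n (take t ?\<tau>))" by (auto simp: convc_iff)
  have ex: "(\<exists>t. conv n (take t ?\<tau>)) \<longleftrightarrow> (\<exists>t<Suc (lenc c). conv n (take t ?\<tau>))"
  proof
    assume "\<exists>t. conv n (take t ?\<tau>)"
    then obtain t where "conv n (take t ?\<tau>)" by blast
    moreover have "take (min t (lenc c)) ?\<tau> = take t ?\<tau>" by (cases "t \<le> lenc c") (auto simp: len min_def)
    ultimately have "conv n (take (min t (lenc c)) ?\<tau>)" by simp
    then show "\<exists>t<Suc (lenc c). conv n (take t ?\<tau>)" by (intro exI[of _ "min t (lenc c)"]) auto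
  qed auto
  show ?thesis unfolding tnc_def tnext_def cv bmin_less ex
    using bmin_eq[of "Suc (lenc c)" "\<lambda>t. conv n (take t ?\<tau>)"] by auto
qed

lemma cf_tnc[cfI]: "cf Q f \<Longrightarrow> cf Q g \<Longrightarrow> cf Q h \<Longrightarrow> cf Q (\<lambda>x. tnc (f x) (g x) (h x))"
proof -
  assume f: "cf Q f" and g: "cf Q g" and h: "cf Q h"
  have P: "cp Q (\<lambda>q. (\<lambda>a t. convc (pr1 a) (pr2 a) t) (pr1 q) (pr2 q))"
    by (intro cpI cfI)
  have B: "cf Q (\<lambda>x. bmin (Suc (lenc (f x))) ((\<lambda>a t. convc (pr1 a) (pr2 a) t) (pe (g x) (f x))))"
    by (rule cf_bmin[OF P]) (intro cfI f g)+
  have B': "cf Q (\<lambda>x. bmin (Suc (lenc (f x))) (convc (g x) (f x)))" using B by simp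
  have "cf Q (\<lambda>x. if bmin (Suc (lenc (f x))) (convc (g x) (f x)) < Suc (lenc (f x))
      then max (h x + 1) (bmin (Suc (lenc (f x))) (convc (g x) (f x))) else h x + 1)"
    unfolding max_def by (intro cfI cpI B' f g h)
  then show ?thesis unfolding tnc_def by simp
qed

definition jstep :: "nat \<Rightarrow> nat \<Rightarrow> nat" where
  "jstep c s = pe (Suc (pr1 s)) (tnc c (pr1 s) (pr2 s))"

definition jtc :: "nat \<Rightarrow> nat \<Rightarrow> nat" where
  "jtc c k = pr2 ((jstep c ^^ Suc k) (pe 0 1))"

lemma jstep_iter: "(jstep c ^^ Suc k) (pe 0 1) = pe (Suc k) (jt (rev (list_decode c)) k)"
proof (induction k)
  case 0 then show ?case by (simp add: jstep_def tnc_eq)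
next
  case (Suc k)
  have "(jstep c ^^ Suc (Suc k)) (pe 0 1) = jstep c ((jstep c ^^ Suc k) (pe 0 1))" by simp
  also have "\<dots> = pe (Suc (Suc k)) (jt (rev (list_decode c)) (Suc k))"
    unfolding Suc by (simp add: jstep_def tnc_eq)
  finally show ?case .
qed

lemma jtc_eq: "jtc c k = jt (rev (list_decode c)) k"
  unfolding jtc_def jstep_iter by simp

lemma cf_jtc[cfI]: "cf Q f \<Longrightarrow> cf Q g \<Longrightarrow> cf Q (\<lambda>x. jtc (f x) (g x))"
  unfolding jtc_def
  by (intro cf_pr2 cf_iter[where h=jstep]) (auto intro!: cfI simp: jstep_def)

lemma jt_mono: "jt \<sigma> k < jt \<sigma> (Suc k)"
  by (auto simp: tnext_def)

lemma jt_ge: "k + 2 \<le> jt \<sigma> k"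
proof (induction k)
  case 0 then show ?case by (simp add: tnext_def)
next
  case (Suc k) then show ?case using jt_mono[of \<sigma> k] by simp
qed

lemma jt_strict: "i < j \<Longrightarrow> jt \<sigma> i < jt \<sigma> j"
  using jt_mono by (metis lift_Suc_mono_less)

lemma Jk_bound: "Jk \<sigma> \<le> length \<sigma>"
  unfolding Jk_def using jt_ge[of "length \<sigma>" \<sigma>] by (intro Least_le) simp

lemma Jk_bmin: "Jk \<sigma> = bmin (Suc (length \<sigma>)) (\<lambda>k. length \<sigma> < jt \<sigma> k)"
proof -
  have "\<exists>k<Suc (length \<sigma>). length \<sigma> < jt \<sigma> k" using jt_ge[of "length \<sigma>" \<sigma>] by (intro exI[of _ "length \<sigma>"]) simp
  then show ?thesis unfolding Jk_def by (simp add: bmin_eq)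
qed

definition Jkc :: "nat \<Rightarrow> nat" where
  "Jkc c = bmin (Suc (lenc c)) (\<lambda>k. lenc c < jtc c k)"

lemma Jkc_eq: "Jkc c = Jk (rev (list_decode c))"
  unfolding Jkc_def Jk_bmin by (simp add: lenc_dec jtc_eq)

lemma cf_Jkc[cfI]: "cf Q f \<Longrightarrow> cf Q (\<lambda>x. Jkc (f x))"
proof -
  assume f: "cf Q f"
  have P: "cp Q (\<lambda>q. (\<lambda>c k. lenc c < jtc c k) (pr1 q) (pr2 q))" by (intro cpI cfI)
  have "cf Q (\<lambda>x. bmin (Suc (lenc (f x))) ((\<lambda>c k. lenc c < jtc c k) (f x)))"
    by (rule cf_bmin[OF P f]) (intro cfI f)
  then show ?thesis unfolding Jkc_def by simp
qed

definition jjstep :: "nat \<Rightarrow> nat \<Rightarrow> nat" where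
  "jjstep c s = pe (Suc (pr1 s)) (consc ((tlc ^^ (lenc c - jtc c (pr1 s))) c) (pr2 s))"

definition JC :: "nat \<Rightarrow> nat" where
  "JC c = pr2 ((jjstep c ^^ Jkc c) (pe 0 0))"

lemma scode_take: "scode (take m (rev (list_decode c))) = (tlc ^^ (lenc c - m)) c"
proof -
  have "(tlc ^^ (lenc c - m)) c = (tlc ^^ (lenc c - m)) (list_encode (list_decode c))" by simp
  also have "\<dots> = list_encode (drop (lenc c - m) (list_decode c))" by (rule tlc_iter)
  also have "\<dots> = list_encode (rev (take m (rev (list_decode c))))"
    by (simp add: rev_take lenc_dec)
  finally show ?thesis by (simp add: scode_def)
qed

lemma jjstep_iter: "(jjstep c ^^ k) (pe 0 0) =
   pe k (list_encode (rev (map (\<lambda>i. scode (take (jt (rev (list_decode c)) i) (rev (list_decode c)))) [0..<k])))"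
proof (induction k)
  case 0 then show ?case by simp
next
  case (Suc k)
  have S: "(jjstep c ^^ Suc k) (pe 0 0) = jjstep c ((jjstep c ^^ k) (pe 0 0))" by simp
  show ?case unfolding S unfolding Suc.IH unfolding jjstep_def by (simp add: scode_take jtc_eq del: consc_eq)
qed

lemma JC_eq: "JC c = scode (Jump (rev (list_decode c)))"
  unfolding JC_def jjstep_iter Jkc_eq by (simp add: Jump_def scode_def)

lemma cf_JC[cfI]: "cf Q f \<Longrightarrow> cf Q (\<lambda>x. JC (f x))"
  unfolding JC_def
  by (intro cf_pr2 cf_iter[where h=jjstep]) (auto intro!: cfI simp: jjstep_def simp del: consc_eq 
      intro: cf_iter[where h="\<lambda>_ s. tlc s" and a="\<lambda>x. 0"])



lemma tnext_take:
  assumes le: "tnext \<sigma> n p \<le> L"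
  shows "tnext (take L \<sigma>) n p = tnext \<sigma> n p"
proof -
  have tt: "take t (take L \<sigma>) = take (min t L) \<sigma>" for t by (simp add: min.commute)
  show ?thesis
  proof (cases "\<exists>t. conv n (take t \<sigma>)")
    case True
    define t0 where "t0 = (LEAST t. conv n (take t \<sigma>))"
    have c0: "conv n (take t0 \<sigma>)" unfolding t0_def using True by (metis LeastI)
    have lt: "\<And>y. conv n (take y \<sigma>) \<Longrightarrow> t0 \<le> y" unfolding t0_def by (rule Least_le)
    have tv: "tnext \<sigma> n p = max (p + 1) t0" using True by (simp add: tnext_def t0_def)
    then have t0L: "t0 \<le> L" using le by simp
    have c0': "conv n (take t0 (take L \<sigma>))" using c0 t0L by (simp add: tt min_def)
    have l': "(LEAST t. conv n (take t (take L \<sigma>))) = t0"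
    proof (rule Least_equality)
      show "conv n (take t0 (take L \<sigma>))" by (rule c0')
      fix y assume "conv n (take y (take L \<sigma>))"
      then have "conv n (take (min y L) \<sigma>)" by (simp add: tt)
      then have "t0 \<le> min y L" by (rule lt)
      then show "t0 \<le> y" by simp
    qed
    show ?thesis unfolding tv unfolding tnext_def using c0' l' by auto
  next
    case False
    then have "\<not> (\<exists>t. conv n (take t (take L \<sigma>)))" by (simp add: tt)
    then show ?thesis using False by (simp add: tnext_def)
  qed
qed

lemma jt_take: "jt \<sigma> i \<le> L \<Longrightarrow> jt (take L \<sigma>) i = jt \<sigma> i"
proof (induction i)
  case 0 then show ?case by (simp add: tnext_take)
next
  case (Suc i)
  have "jt \<sigma> i < jt \<sigma> (Suc i)" by (rule jt_mono)
  then have "jt (take L \<sigma>) i = jt \<sigma> i" using Suc by simp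
  then show ?case using Suc.prems by (simp add: tnext_take)
qed

lemma jt_le_mono: "i \<le> j \<Longrightarrow> jt \<sigma> i \<le> jt \<sigma> j"
proof (cases "i = j")
  case False
  assume "i \<le> j"
  with False have "i < j" by simp
  then show ?thesis using jt_strict[of i j \<sigma>] by simp
qed simp

lemma jt_le_len: "i < Jk \<sigma> \<Longrightarrow> jt \<sigma> i \<le> length \<sigma>"
  unfolding Jk_def using not_less_Least by fastforce

lemma length_Jump[simp]: "length (Jump \<sigma>) = Jk \<sigma>" by (simp add: Jump_def)

lemma Jump_prefix:
  assumes m: "0 < m" "m \<le> Jk \<sigma>"
  shows "Jump (take (jt \<sigma> (m - 1)) \<sigma>) = take m (Jump \<sigma>)"
proof -
  define L where "L = jt \<sigma> (m - 1)"
  let ?\<sigma> = "take L \<sigma>"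
  have Lle: "L \<le> length \<sigma>" unfolding L_def using m by (intro jt_le_len) simp
  have len: "length ?\<sigma> = L" using Lle by simp
  have jeq: "\<And>i. i \<le> m - 1 \<Longrightarrow> jt ?\<sigma> i = jt \<sigma> i"
  proof -
    fix i assume "i \<le> m - 1"
    then have "jt \<sigma> i \<le> L" unfolding L_def by (rule jt_le_mono)
    then show "jt ?\<sigma> i = jt \<sigma> i" by (rule jt_take)
  qed
  have Jk': "Jk ?\<sigma> = m"
    unfolding Jk_def len
  proof (rule Least_equality)
    have "jt ?\<sigma> (m - 1) < jt ?\<sigma> m" using jt_strict[of "m - 1" m] m by simp
    then show "L < jt ?\<sigma> m" using jeq[of "m - 1"] L_def by simp
    fix y assume y: "L < jt ?\<sigma> y"
    show "m \<le> y"
    proof (rule ccontr)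
      assume "\<not> m \<le> y"
      then have "y \<le> m - 1" by simp
      then have "jt ?\<sigma> y = jt \<sigma> y" "jt \<sigma> y \<le> L" using jeq unfolding L_def
        by (auto intro: jt_le_mono)
      then show False using y by simp
    qed
  qed
  have "Jump ?\<sigma> = map (\<lambda>i. scode (take (jt ?\<sigma> i) ?\<sigma>)) [0..<m]" unfolding Jump_def Jk' ..
  also have "\<dots> = map (\<lambda>i. scode (take (jt \<sigma> i) \<sigma>)) [0..<m]"
  proof (rule map_cong[OF refl])
    fix i assume "i \<in> set [0..<m]"
    then have i: "i \<le> m - 1" by simp
    then have "jt \<sigma> i \<le> L" unfolding L_def by (rule jt_le_mono)
    then show "scode (take (jt ?\<sigma> i) ?\<sigma>) = scode (take (jt \<sigma> i) \<sigma>)" using jeq[OF i] by (simp add: min_def)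
  qed
  also have "\<dots> = take m (Jump \<sigma>)" unfolding Jump_def using m by (simp add: take_map)
  finally show ?thesis unfolding L_def .
qed

lemma Jk_Nil: "Jk [] = 0"
  unfolding Jk_def using jt_ge[of 0 "[]"] by (intro Least_equality) auto

lemma Jump_Nil: "Jump [] = []" by (simp add: Jump_def Jk_Nil)

lemma tree_Nil: "is_tree T \<Longrightarrow> \<sigma> \<in> T \<Longrightarrow> [] \<in> T"
  unfolding is_tree_def by auto

lemma tree_take: "is_tree T \<Longrightarrow> \<sigma> \<in> T \<Longrightarrow> take L \<sigma> \<in> T"
  unfolding is_tree_def by (meson take_is_prefix)

lemma JT_tree: "is_tree T \<Longrightarrow> is_tree (JT T)"
  unfolding is_tree_def[of "JT T"]
proof (intro ballI allI impI)
  fix \<tau> \<rho> assume T: "is_tree T" and \<tau>: "\<tau> \<in> JT T" and p: "prefix \<rho> \<tau>"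
  from \<tau> obtain \<sigma> where \<sigma>: "\<sigma> \<in> T" "\<tau> = Jump \<sigma>" unfolding JT_def by blast
  let ?m = "length \<rho>"
  have \<rho>: "\<rho> = take ?m (Jump \<sigma>)" using p \<sigma> by (metis append_eq_conv_conj prefix_def)
  have mle: "?m \<le> Jk \<sigma>" using prefix_length_le[OF p] \<sigma> by simp
  show "\<rho> \<in> JT T"
  proof (cases "?m = 0")
    case True
    then have "\<rho> = Jump []" by (simp add: Jump_Nil)
    then show ?thesis unfolding JT_def using tree_Nil[OF T \<sigma>(1)] by blast
  next
    case False
    then have "\<rho> = Jump (take (jt \<sigma> (?m - 1)) \<sigma>)" using Jump_prefix[of ?m \<sigma>] mle \<rho> by simp
    then show ?thesis unfolding JT_def using tree_take[OF T \<sigma>(1)] by blast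
  qed
qed



lemma scode_inj: "scode a = scode b \<longleftrightarrow> a = b"
  by (simp add: scode_def list_encode_eq)

lemma scode_dec: "scode (rev (list_decode y)) = y" by (simp add: scode_def)

lemma mem_scode: "y \<in> scode ` S \<longleftrightarrow> rev (list_decode y) \<in> S"
proof
  assume "y \<in> scode ` S"
  then obtain s where "s \<in> S" "y = scode s" by blast
  then show "rev (list_decode y) \<in> S" by (simp add: scode_def)
next
  assume "rev (list_decode y) \<in> S"
  then show "y \<in> scode ` S" using scode_dec[of y] by (metis image_eqI)
qed

definition Dfun :: "nat set \<Rightarrow> nat \<Rightarrow> nat" where
  "Dfun X x = (if x = 0 then (if 0 \<in> X then 1 else 0)
     else (if hdc x \<in> X then 1 else 0) * (if JC (hdc x) = x then 1 else 0))"

lemma cf_Dfun: "cf (char_orc X) (Dfun X)"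
proof -
  have o: "cf (char_orc X) (\<lambda>y. the (char_orc X y))" by (rule cf_orc) (simp add: char_orc_def)
  have o': "(\<lambda>y. the (char_orc X y)) = (\<lambda>y. if y \<in> X then 1 else 0)" by (auto simp: char_orc_def)
  have O: "cf (char_orc X) (\<lambda>y. if y \<in> X then 1 else 0)" using o o' by simp
  have O0: "cf (char_orc X) (\<lambda>x. if (0::nat) \<in> X then 1 else 0)" by (rule cf_const)
  have O1: "cf (char_orc X) (\<lambda>x. if hdc x \<in> X then 1 else 0)" by (rule cf_comp[OF O]) (intro cfI)
  have "cf (char_orc X) (\<lambda>x. if x = 0 then (if 0 \<in> X then 1 else 0)
     else (if hdc x \<in> X then 1 else 0) * (if JC (hdc x) = x then 1 else 0))"
    by (rule cf_if) (intro cpI cfI O0 O1 cf_mult)+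
  then show ?thesis unfolding Dfun_def[abs_def] .
qed

lemma Dfun_correct:
  assumes T: "is_tree T"
  shows "Dfun (scode ` T) x = (if x \<in> scode ` JT T then 1 else 0)"
proof (cases "x = 0")
  case True
  have "0 \<in> scode ` JT T \<longleftrightarrow> 0 \<in> scode ` T"
    unfolding mem_scode JT_def
  proof
    assume "rev (list_decode 0) \<in> Jump ` T"
    then obtain \<sigma> where "\<sigma> \<in> T" by auto
    then show "rev (list_decode 0) \<in> T" using tree_Nil[OF T] by simp
  next
    assume "rev (list_decode 0) \<in> T"
    then have "[] \<in> T" by simp
    then show "rev (list_decode 0) \<in> Jump ` T" using Jump_Nil by force
  qed
  then show ?thesis using True by (simp add: Dfun_def)
next
  case False
  let ?s = "rev (list_decode x)"
  let ?c = "hdc x"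
  have sne: "list_decode x \<noteq> []" using False by (metis list_decode_inverse list_encode.simps(1))
  have hc: "?c = hd (list_decode x)"
    using sne by (metis hdc_enc list.collapse list_decode_inverse)
  have last: "last ?s = ?c" using hc sne by (simp add: last_rev)
  have xs: "scode ?s = x" by (rule scode_dec)
  have fwd: "Dfun (scode ` T) x = 1" if mem: "?s \<in> JT T"
  proof -
    from mem obtain \<sigma> where \<sigma>: "\<sigma> \<in> T" "?s = Jump \<sigma>" unfolding JT_def by blast
    define m where "m = Jk \<sigma>"
    have m0: "0 < m" using sne \<sigma>(2) unfolding m_def by (metis length_Jump length_greater_0_conv length_rev)
    define \<tau> where "\<tau> = take (jt \<sigma> (m - 1)) \<sigma>"
    have \<tau>T: "\<tau> \<in> T" unfolding \<tau>_def by (rule tree_take[OF T \<sigma>(1)])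
    have J\<tau>: "Jump \<tau> = Jump \<sigma>" unfolding \<tau>_def using Jump_prefix[of m \<sigma>] m0 by (simp add: m_def)
    have "last (Jump \<sigma>) = scode \<tau>"
      unfolding Jump_def \<tau>_def using m0 by (simp add: m_def last_map)
    then have c\<tau>: "?c = scode \<tau>" using last \<sigma>(2) by simp
    have d\<tau>: "rev (list_decode ?c) = \<tau>" unfolding c\<tau> by (simp add: scode_def)
    have "?c \<in> scode ` T" using c\<tau> \<tau>T by blast
    moreover have "JC ?c = x" unfolding JC_eq d\<tau> J\<tau> using \<sigma>(2) xs by simp
    ultimately show ?thesis using False by (simp add: Dfun_def)
  qed
  have bwd: "?s \<in> JT T" if D: "Dfun (scode ` T) x \<noteq> 0"
  proof -
    from D False have c: "?c \<in> scode ` T" and j: "JC ?c = x" by (auto simp: Dfun_def split: if_splits)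
    have "rev (list_decode ?c) \<in> T" using c by (simp add: mem_scode)
    moreover have "Jump (rev (list_decode ?c)) = ?s"
      using j xs unfolding JC_eq by (metis scode_inj)
    ultimately show ?thesis unfolding JT_def by (metis image_eqI)
  qed
  have "x \<in> scode ` JT T \<longleftrightarrow> ?s \<in> JT T" by (rule mem_scode)
  moreover have "Dfun (scode ` T) x = 0 \<or> Dfun (scode ` T) x = 1" by (simp add: Dfun_def)
  ultimately show ?thesis using fwd bwd by auto
qed

lemma cf_computable:
  assumes "cf (char_orc X) f" and "\<And>x. f x = (if x \<in> A then 1 else 0)"
  shows "computable_in A X"
proof -
  from assms(1) obtain c where c: "\<And>R. \<exists>R'. big (char_orc X) c R R' \<and> R' 0 = f (R 0)"
    unfolding cf_def by blast
  show ?thesis unfolding computable_in_def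
  proof (rule exI[of _ "comp c 0"], rule allI)
    fix x
    obtain R' where R': "big (char_orc X) c (init x) R'" "R' 0 = f (init x 0)" using c by blast
    obtain s where "run (comp c 0) (char_orc X) s (0, init x) = Some (length (comp c 0), R')"
      using comp_top[OF R'(1)] by blast
    moreover have "R' 0 = (if x \<in> A then 1 else 0)" using R'(2) assms(2) by (simp add: init_def)
    ultimately show "\<exists>s pc R. run (comp c 0) (char_orc X) s (0, init x) = Some (pc, R) \<and>
         length (comp c 0) \<le> pc \<and> R 0 = (if x \<in> A then 1 else 0)" by blast
  qed
qed

theorem lemma4p8:
  fixes T :: "nat list set"
  assumes "is_tree T"
  shows "is_tree (JT T) \<and> computable_in (scode ` JT T) (scode ` T)"
  using JT_tree[OF assms] cf_computable[OF cf_Dfun Dfun_correct[OF assms]] by blast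


end
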